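(* Let $g(t)$, $t\in[0,T)$, be the maximal Ricci flow solution on $S^1\times S^3$ of the form $g(t)=\phi^2dz^2+a^2\omega^1\otimes\omega^1+b^2\omega^2\otimes\omega^2+c^2\omega^3\otimes\omega^3$. Suppose that $a\le b\le c\le\lambda a$ for some $1<\lambda<2$ at time $t=0$. Then for all $(s,t)\in S^1\times[0,T)$ there exist constants $C_1(\lambda),C_2(\lambda),C_3(\lambda)>0$ such that $$|a'(s,t)|\le C_1(\lambda)\le\max\left(\tfrac{280\sqrt3}{9},\max_s|a'(s,0)|\right),$$ $$|b'(s,t)|\le C_2(\lambda)\le\max\left(\tfrac{4\sqrt{57}}{3},\max_s|b'(s,0)|\right),$$ $$|c'(s,t)|\le C_3(\lambda)\le\max\left(\tfrac{10\sqrt{93}}{9},\max_s|c'(s,0)|\right).$$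
   Context: $S^3=SU(2)$ carries a global left-invariant frame $E_1,E_2,E_3$ with $[E_i,E_j]=-2\epsilon_{ijk}E_k$ and dual coframe $\omega^i$; $z\in S^1=[0,2\pi)$, $\phi,a,b,c$ positive smooth $2\pi$-periodic functions; $s$ is the arclength coordinate $ds=\phi\,dz$ and $'$ denotes $\partial_s$. The Ricci flow $\partial_tg=-2\mathrm{Ric}(g)$ preserves this form. *)

theory Defs
  imports "HOL-Analysis.Analysis"
begin

definition tint :: "ereal \<Rightarrow> real set" where
  "tint T = {t. 0 \<le> t \<and> ereal t < T}"

definition pz :: "(real \<Rightarrow> real \<Rightarrow> real) \<Rightarrow> real \<Rightarrow> real \<Rightarrow> real" where
  "pz f z t = deriv (\<lambda>y. f y t) z"

definition pt :: "ereal \<Rightarrow> (real \<Rightarrow> real \<Rightarrow> real) \<Rightarrow> real \<Rightarrow> real \<Rightarrow> real" where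
  "pt T f z t = (THE D. ((\<lambda>s. f z s) has_real_derivative D) (at t within tint T))"

(* smooth on S^1-cover x [0,T): continuous with all iterated partials existing and continuous *)
coinductive smooth_strip :: "ereal \<Rightarrow> (real \<Rightarrow> real \<Rightarrow> real) \<Rightarrow> bool" for T where
  "\<lbrakk> continuous_on (UNIV \<times> tint T) (\<lambda>(z,t). f z t);
     \<forall>z. \<forall>t\<in>tint T. (\<lambda>y. f y t) differentiable (at z)
                   \<and> (\<lambda>s. f z s) differentiable (at t within tint T);
     smooth_strip T (pz f); smooth_strip T (pt T f) \<rbrakk> \<Longrightarrow> smooth_strip T f"

(* arclength derivative ' = (1/phi) d/dz *)
definition sd :: "(real \<Rightarrow> real \<Rightarrow> real) \<Rightarrow> (real \<Rightarrow> real \<Rightarrow> real) \<Rightarrow> real \<Rightarrow> real \<Rightarrow> real" where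
  "sd \<phi> f z t = pz f z t / \<phi> z t"

(* Ricci flow dt g = -2 Ric for g = phi^2 dz^2 + a^2 w1^2 + b^2 w2^2 + c^2 w3^2,
   with [E_i,E_j] = -2 eps_ijk E_k, written as the PDE system for phi,a,b,c *)
definition rf_solution :: "ereal \<Rightarrow> (real \<Rightarrow> real \<Rightarrow> real) \<Rightarrow> (real \<Rightarrow> real \<Rightarrow> real)
    \<Rightarrow> (real \<Rightarrow> real \<Rightarrow> real) \<Rightarrow> (real \<Rightarrow> real \<Rightarrow> real) \<Rightarrow> bool" where
  "rf_solution T \<phi> a b c \<longleftrightarrow> 0 < T \<and>
    (\<forall>f\<in>{\<phi>, a, b, c}. smooth_strip T f \<and>
        (\<forall>z. \<forall>t\<in>tint T. 0 < f z t \<and> f (z + 2 * pi) t = f z t)) \<and>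
    (\<forall>z. \<forall>t\<in>tint T.
      ((\<lambda>s. \<phi> z s) has_real_derivative
          \<phi> z t * (sd \<phi> (sd \<phi> a) z t / a z t + sd \<phi> (sd \<phi> b) z t / b z t
                     + sd \<phi> (sd \<phi> c) z t / c z t)) (at t within tint T) \<and>
      ((\<lambda>s. a z s) has_real_derivative
          sd \<phi> (sd \<phi> a) z t + sd \<phi> a z t * (sd \<phi> b z t / b z t + sd \<phi> c z t / c z t)
          - 2 * ((a z t)^4 - ((b z t)^2 - (c z t)^2)^2) / (a z t * (b z t)^2 * (c z t)^2))
          (at t within tint T) \<and>
      ((\<lambda>s. b z s) has_real_derivative
          sd \<phi> (sd \<phi> b) z t + sd \<phi> b z t * (sd \<phi> a z t / a z t + sd \<phi> c z t / c z t)
          - 2 * ((b z t)^4 - ((a z t)^2 - (c z t)^2)^2) / ((a z t)^2 * b z t * (c z t)^2))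
          (at t within tint T) \<and>
      ((\<lambda>s. c z s) has_real_derivative
          sd \<phi> (sd \<phi> c) z t + sd \<phi> c z t * (sd \<phi> a z t / a z t + sd \<phi> b z t / b z t)
          - 2 * ((c z t)^4 - ((a z t)^2 - (b z t)^2)^2) / ((a z t)^2 * (b z t)^2 * c z t))
          (at t within tint T))"

definition rf_maximal :: "ereal \<Rightarrow> (real \<Rightarrow> real \<Rightarrow> real) \<Rightarrow> (real \<Rightarrow> real \<Rightarrow> real)
    \<Rightarrow> (real \<Rightarrow> real \<Rightarrow> real) \<Rightarrow> (real \<Rightarrow> real \<Rightarrow> real) \<Rightarrow> bool" where
  "rf_maximal T \<phi> a b c \<longleftrightarrow> rf_solution T \<phi> a b c \<and>
     (\<forall>T'>T. \<not> (\<exists>\<phi>1 a1 b1 c1. rf_solution T' \<phi>1 a1 b1 c1 \<and>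
        (\<forall>z. \<forall>t\<in>tint T. \<phi>1 z t = \<phi> z t \<and> a1 z t = a z t \<and> b1 z t = b z t \<and> c1 z t = c z t)))"

end

theory Submission
  imports Defs
begin

lemma tint_ball:
  assumes "t \<in> tint T" "0 < t"
  shows "\<exists>e>0. ball t e \<subseteq> tint T \<inter> {0<..}"
proof (cases T)
  case (real r)
  with assms have "t < r" by (simp add: tint_def)
  show ?thesis
    apply (rule exI[of _ "min t (r - t)"])
    using assms \<open>t < r\<close> real by (auto simp: tint_def dist_real_def)
next
  case PInf
  show ?thesis
    apply (rule exI[of _ t])
    using assms PInf by (auto simp: tint_def dist_real_def)
next
  case MInf
  with assms show ?thesis by (simp add: tint_def)
qed

lemma tint_interior: "t \<in> tint T \<Longrightarrow> 0 < t \<Longrightarrow> t \<in> interior (tint T)"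
  using tint_ball[of t T] unfolding mem_interior by blast

lemma at_tint: "t \<in> tint T \<Longrightarrow> 0 < t \<Longrightarrow> at t within tint T = at t"
  by (rule at_within_interior[OF tint_interior])

lemma tint_0: "0 < T \<Longrightarrow> (0::real) \<in> tint T"
  by (simp add: tint_def zero_ereal_def)

lemma tint_le: "t \<in> tint T \<Longrightarrow> 0 \<le> s \<Longrightarrow> s \<le> t \<Longrightarrow> s \<in> tint T"
  by (auto simp: tint_def) (meson ereal_less_eq(3) le_less_trans)

lemma ss_cont: "smooth_strip T f \<Longrightarrow> continuous_on (UNIV \<times> tint T) (\<lambda>(z,t). f z t)"
  by (erule smooth_strip.cases) auto

lemma ss_pz: "smooth_strip T f \<Longrightarrow> smooth_strip T (pz f)"
  by (erule smooth_strip.cases) auto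

lemma ss_pt: "smooth_strip T f \<Longrightarrow> smooth_strip T (pt T f)"
  by (erule smooth_strip.cases) auto

lemma ss_dz: "smooth_strip T f \<Longrightarrow> t \<in> tint T \<Longrightarrow> ((\<lambda>y. f y t) has_real_derivative pz f z t) (at z)"
  unfolding pz_def by (erule smooth_strip.cases) (auto simp: DERIV_deriv_iff_real_differentiable)

lemma ss_dt: "smooth_strip T f \<Longrightarrow> t \<in> tint T \<Longrightarrow> 0 < t \<Longrightarrow> ((\<lambda>s. f z s) has_real_derivative pt T f z t) (at t)"
proof -
  assume f: "smooth_strip T f" and t: "t \<in> tint T" "0 < t"
  have "(\<lambda>s. f z s) differentiable (at t within tint T)"
    using f t by (cases rule: smooth_strip.cases) auto
  hence "(\<lambda>s. f z s) differentiable (at t)" by (simp add: at_tint[OF t])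
  hence d: "((\<lambda>s. f z s) has_real_derivative deriv (\<lambda>s. f z s) t) (at t)"
    by (simp add: DERIV_deriv_iff_real_differentiable)
  have "pt T f z t = deriv (\<lambda>s. f z s) t"
    unfolding pt_def at_tint[OF t]
    using d DERIV_unique by blast
  with d show ?thesis by simp
qed

lemma pt_eq: "t \<in> tint T \<Longrightarrow> 0 < t \<Longrightarrow> ((\<lambda>s. f z s) has_real_derivative D) (at t within tint T) \<Longrightarrow> pt T f z t = D"
  unfolding pt_def at_tint by (rule the_equality) (auto intro: DERIV_unique)

lemma per_int:
  assumes "\<And>z. f (z + 2*pi) = (f z :: 'a)"
  shows "f (z + 2*pi*real_of_int n) = f z"
proof -
  have pos: "f (z + 2*pi*real m) = f z" for z m
  proof (induction m)
    case (Suc m)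
    have "z + 2*pi*real (Suc m) = (z + 2*pi*real m) + 2*pi" by (simp add: algebra_simps)
    then show ?case using assms[of "z + 2*pi*real m"] Suc by (simp only:)
  qed simp
  show ?thesis
  proof (cases "n \<ge> 0")
    case True
    define m where "m = nat n"
    have "n = int m" unfolding m_def using True by simp
    thus ?thesis using pos by simp
  next
    case False
    define m where "m = nat (- n)"
    have m: "n = - int m" unfolding m_def using False by simp
    have "f (z + 2*pi*real_of_int n + 2*pi*real m) = f (z + 2*pi*real_of_int n)" by (rule pos)
    thus ?thesis using m by simp
  qed
qed

lemma per_red:
  assumes "\<And>z. f (z + 2*pi) = (f z :: 'a)"
  shows "\<exists>y\<in>{0..2*pi}. f y = f z"
proof -
  define n where "n = \<lfloor>z / (2*pi)\<rfloor>"
  define y where "y = z + 2*pi*real_of_int (-n)"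
  have "real_of_int n \<le> z / (2*pi)" "z / (2*pi) < real_of_int n + 1" unfolding n_def by linarith+
  hence "2*pi*real_of_int n \<le> z" "z < 2*pi*(real_of_int n + 1)"
    using pi_gt_zero by (simp_all add: field_simps)
  hence "y \<in> {0..2*pi}" unfolding y_def by (auto simp: algebra_simps)
  moreover have "f y = f z" unfolding y_def by (rule per_int[where f=f, OF assms])
  ultimately show ?thesis by blast
qed

lemma minp:
  fixes w \<kappa> :: "real \<Rightarrow> real \<Rightarrow> real"
  assumes T0: "0 < T"
    and cw: "continuous_on (UNIV \<times> tint T) (\<lambda>(z,t). w z t)"
    and ck: "continuous_on (UNIV \<times> tint T) (\<lambda>(z,t). \<kappa> z t)"
    and per: "\<forall>z. \<forall>t\<in>tint T. w (z + 2*pi) t = w z t"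
    and init: "\<forall>z. 0 \<le> w z 0"
    and step: "\<forall>z t. t \<in> tint T \<longrightarrow> 0 < t \<longrightarrow> (\<forall>y. w z t \<le> w y t) \<longrightarrow> w z t < 0 \<longrightarrow>
        (\<exists>D. ((\<lambda>s. w z s) has_real_derivative D) (at t) \<and> \<kappa> z t * w z t < D)"
  shows "\<forall>z. \<forall>t\<in>tint T. 0 \<le> w z t"
proof (intro allI ballI)
  fix z1 t1 assume t1: "t1 \<in> tint T"
  define S where "S = {0..2*pi} \<times> {0..t1}"
  have t10: "0 \<le> t1" using t1 by (simp add: tint_def)
  have SS: "S \<subseteq> UNIV \<times> tint T" unfolding S_def using t1 tint_le by auto
  have cS: "compact S" unfolding S_def by (intro compact_Times compact_Icc)
  have Sne: "S \<noteq> {}" unfolding S_def using t10 by auto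
  have "bounded ((\<lambda>(z,t). \<kappa> z t) ` S)"
    by (rule compact_imp_bounded, rule compact_continuous_image[OF continuous_on_subset[OF ck SS] cS])
  then obtain M where M0: "\<forall>x\<in>(\<lambda>(z,t). \<kappa> z t) ` S. norm x \<le> M"
    unfolding bounded_iff by blast
  hence M: "\<And>z t. (z,t) \<in> S \<Longrightarrow> \<bar>\<kappa> z t\<bar> \<le> M" by force
  define v where "v = (\<lambda>(z,t). exp (- M * t) * w z t)"
  have cv: "continuous_on S v"
    unfolding v_def using continuous_on_subset[OF cw SS]
    by (auto intro!: continuous_intros simp: split_def case_prod_unfold)
  obtain p0 where p0: "p0 \<in> S" and pmin: "\<And>p. p \<in> S \<Longrightarrow> v p0 \<le> v p"
    using continuous_attains_inf[OF cS Sne cv] by blast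
  obtain z0 t2 where p0e: "p0 = (z0, t2)" by fastforce
  have z0: "z0 \<in> {0..2*pi}" and t2: "0 \<le> t2" "t2 \<le> t1" using p0 p0e S_def by auto
  have t2T: "t2 \<in> tint T" using tint_le[OF t1 t2] .
  have nonneg: "0 \<le> v p0"
  proof (rule ccontr)
    assume neg: "\<not> 0 \<le> v p0"
    hence wneg: "w z0 t2 < 0" unfolding p0e v_def by (simp add: zero_le_mult_iff)
    have t2pos: "0 < t2"
    proof (rule ccontr)
      assume "\<not> 0 < t2" hence "t2 = 0" using t2 by simp
      thus False using wneg init by (metis not_le)
    qed
    have gmin: "\<forall>y. w z0 t2 \<le> w y t2"
    proof
      fix y
      obtain y' where y': "y' \<in> {0..2*pi}" "w y' t2 = w y t2"
        using per_red[of "\<lambda>z. w z t2" y] per t2T by auto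
      have "(y', t2) \<in> S" using y' t2 unfolding S_def by auto
      from pmin[OF this] have "exp (- M * t2) * w z0 t2 \<le> exp (- M * t2) * w y' t2"
        unfolding p0e v_def by simp
      thus "w z0 t2 \<le> w y t2" using y' by simp
    qed
    obtain D where D: "((\<lambda>s. w z0 s) has_real_derivative D) (at t2)" "\<kappa> z0 t2 * w z0 t2 < D"
      using step t2T t2pos gmin wneg by blast
    have kM: "\<kappa> z0 t2 \<le> M" using M p0 p0e by fastforce
    have "(\<kappa> z0 t2 - M) * w z0 t2 \<ge> 0" using kM wneg by (simp add: mult_nonpos_nonpos)
    hence Dpos: "0 < D - M * w z0 t2" using D(2) by (simp add: algebra_simps)
    have dv: "((\<lambda>s. exp (- M * s) * w z0 s) has_real_derivative
        (exp (- M * t2) * (- M) * w z0 t2 + exp (- M * t2) * D)) (at t2)"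
      by (rule derivative_eq_intros D(1) refl)+ (simp add: algebra_simps)
    have "0 < exp (- M * t2) * (- M) * w z0 t2 + exp (- M * t2) * D"
      using Dpos by (simp add: algebra_simps)
    from DERIV_pos_inc_left[OF dv this] obtain d where d: "0 < d"
      "\<And>h. 0 < h \<Longrightarrow> h < d \<Longrightarrow> exp (- M * (t2 - h)) * w z0 (t2 - h) < exp (- M * t2) * w z0 t2"
      by blast
    define h where "h = min (d/2) t2"
    have h: "0 < h" "h < d" "h \<le> t2" unfolding h_def using d t2pos by auto
    have "(z0, t2 - h) \<in> S" using z0 h t2 unfolding S_def by auto
    from pmin[OF this] d(2)[OF h(1,2)] show False unfolding p0e v_def by simp
  qed
  obtain y where y: "y \<in> {0..2*pi}" "w y t1 = w z1 t1"
    using per_red[of "\<lambda>z. w z t1" z1] per t1 by auto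
  have "(y, t1) \<in> S" using y t10 unfolding S_def by auto
  from pmin[OF this] nonneg have "0 \<le> exp (- M * t1) * w y t1" unfolding v_def by simp
  hence "0 \<le> w y t1" by (simp add: zero_le_mult_iff)
  thus "0 \<le> w z1 t1" using y by simp
qed

definition Gf :: "real \<Rightarrow> real \<Rightarrow> real \<Rightarrow> real" where
  "Gf x y z = (x^4 - (y^2 - z^2)^2) / (x * y^2 * z^2)"

definition Pp :: "real \<Rightarrow> real \<Rightarrow> real \<Rightarrow> real" where
  "Pp a b c = b^4 + a*b^3 + a^2*b^2 + a^3*b + a^4 + a*b*(b^2 + a*b + a^2) - 2*a*b*c^2 - c^4"

lemma Gf_diff: "a > 0 \<Longrightarrow> b > 0 \<Longrightarrow> c > 0 \<Longrightarrow>
  Gf b a c - Gf a b c = (b - a) * Pp a b c / (a^2 * b^2 * c^2)"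
proof -
  assume p: "a > 0" "b > 0" "c > 0"
  have 1: "Gf b a c = (b*(b^4-(a^2-c^2)^2))/(a^2*b^2*c^2)"
    unfolding Gf_def using p by (simp add: power2_eq_square)
  have 2: "Gf a b c = (a*(a^4-(b^2-c^2)^2))/(a^2*b^2*c^2)"
    unfolding Gf_def using p by (simp add: power2_eq_square)
  have 3: "b*(b^4-(a^2-c^2)^2) - a*(a^4-(b^2-c^2)^2) = (b - a) * Pp a b c"
    unfolding Pp_def by algebra
  show ?thesis unfolding 1 2 diff_divide_distrib[symmetric] 3 ..
qed

lemma pair_alg:
  fixes P Fz Fo Ft Gz Go Gt Hz Ho Po :: real
  assumes "P > 0" "Fz > 0" "Gz > 0" "Hz > 0" "Go = Fo" "Gt \<ge> Ft" "Gz - Fz < 0"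
  shows "((Fo/P)^2/(Fz*Gz) - 2 * Pp Fz Gz Hz/(Fz^2*Gz^2*Hz^2) + 1) * (Gz - Fz) <
    ((Gt*P - Go*Po)/P^3 + (Go/P)*(Fo/P/Fz + Ho/P/Hz) - 2 * Gf Gz Fz Hz) -
    ((Ft*P - Fo*Po)/P^3 + (Fo/P)*(Go/P/Gz + Ho/P/Hz) - 2 * Gf Fz Gz Hz)"
proof -
  define w where "w = Gz - Fz"
  define A where "A = (Fo/P)^2/(Fz*Gz)"
  define B where "B = Pp Fz Gz Hz/(Fz^2*Gz^2*Hz^2)"
  have e1: "(Gt*P - Go*Po)/P^3 - (Ft*P - Fo*Po)/P^3 = (Gt - Ft)/P^2"
    using assms by (simp add: diff_divide_distrib[symmetric] power3_eq_cube power2_eq_square algebra_simps)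
       (simp add: left_diff_distrib[symmetric])
  have e2: "(Go/P)*(Fo/P/Fz + Ho/P/Hz) - (Fo/P)*(Go/P/Gz + Ho/P/Hz) = A * w"
    unfolding A_def w_def using assms by (simp add: field_simps power2_eq_square)
  have e3: "Gf Gz Fz Hz - Gf Fz Gz Hz = w * B"
    unfolding w_def B_def using Gf_diff[of Fz Gz Hz] assms by simp
  have "(Gt - Ft)/P^2 \<ge> 0" using assms by simp
  moreover have "w < 0" using assms w_def by simp
  ultimately have ineq: "(A - 2*B + 1) * w < (Gt - Ft)/P^2 + A * w - 2 * (w * B)"
    by (simp add: algebra_simps)
  have k: "((Fo/P)^2/(Fz*Gz) - 2 * Pp Fz Gz Hz/(Fz^2*Gz^2*Hz^2) + 1) = A - 2*B + 1"
    by (simp add: A_def B_def)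
  have r: "((Gt*P - Go*Po)/P^3 + (Go/P)*(Fo/P/Fz + Ho/P/Hz) - 2 * Gf Gz Fz Hz) -
    ((Ft*P - Fo*Po)/P^3 + (Fo/P)*(Go/P/Gz + Ho/P/Hz) - 2 * Gf Fz Gz Hz) = (Gt - Ft)/P^2 + A * w - 2 * (w * B)"
    using e1 e2 e3 by linarith
  show ?thesis unfolding k r w_def[symmetric] by (rule ineq)
qed

lemma dist_pair_le: "dist (a::real, b::real) (c, d) \<le> \<bar>a - c\<bar> + \<bar>b - d\<bar>"
  using norm_Pair_le[of "a - c" "b - d"] by (simp add: dist_norm)

lemma cont2:
  fixes F :: "real \<Rightarrow> real \<Rightarrow> real"
  assumes c: "continuous_on (UNIV \<times> I) (\<lambda>(y,s). F y s)" and I: "open I" "t0 \<in> I" and e: "e > 0"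
  shows "\<exists>d>0. \<forall>y s. \<bar>y - z0\<bar> < d \<longrightarrow> \<bar>s - t0\<bar> < d \<longrightarrow> s \<in> I \<and> \<bar>F y s - F z0 t0\<bar> < e"
proof -
  obtain d1 where d1: "d1 > 0" "\<forall>x'\<in>UNIV \<times> I. dist x' (z0, t0) < d1 \<longrightarrow>
      dist ((\<lambda>(y,s). F y s) x') ((\<lambda>(y,s). F y s) (z0, t0)) < e"
    using c e I(2) unfolding continuous_on_iff by blast
  obtain d3 where d3: "d3 > 0" "ball t0 d3 \<subseteq> I" using I openE by blast
  show ?thesis
  proof (intro exI[of _ "min (d1/2) d3"] conjI allI impI)
    show "0 < min (d1/2) d3" using d1 d3 by simp
    fix y s assume y: "\<bar>y - z0\<bar> < min (d1/2) d3" and s: "\<bar>s - t0\<bar> < min (d1/2) d3"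
    show sI: "s \<in> I" using d3 s by (auto simp: dist_real_def abs_minus_commute)
    have "dist (y, s) (z0, t0) < d1" using dist_pair_le[of y s z0 t0] y s by linarith
    with d1(2) sI show "\<bar>F y s - F z0 t0\<bar> < e" by (auto simp: dist_real_def)
  qed
qed

lemma tri_aux: "\<bar>a - x\<bar> < \<bar>y - x\<bar>/2 \<Longrightarrow> \<bar>b - y\<bar> < \<bar>y - x\<bar>/2 \<Longrightarrow> a = (b::real) \<Longrightarrow> False"
  by (auto simp: abs_if split: if_split_asm)

lemma clairaut:
  fixes f fz ft fzt ftz :: "real \<Rightarrow> real \<Rightarrow> real"
  assumes I: "open I" "t0 \<in> I"
    and dz: "\<And>y s. s \<in> I \<Longrightarrow> ((\<lambda>y. f y s) has_real_derivative fz y s) (at y)"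
    and dt: "\<And>y s. s \<in> I \<Longrightarrow> ((\<lambda>s. f y s) has_real_derivative ft y s) (at s)"
    and dtz: "\<And>y s. s \<in> I \<Longrightarrow> ((\<lambda>y. ft y s) has_real_derivative ftz y s) (at y)"
    and dzt: "\<And>y s. s \<in> I \<Longrightarrow> ((\<lambda>s. fz y s) has_real_derivative fzt y s) (at s)"
    and c1: "continuous_on (UNIV \<times> I) (\<lambda>(y,s). ftz y s)"
    and c2: "continuous_on (UNIV \<times> I) (\<lambda>(y,s). fzt y s)"
  shows "fzt z0 t0 = ftz z0 t0"
proof (rule ccontr)
  assume ne: "fzt z0 t0 \<noteq> ftz z0 t0"
  define e where "e = \<bar>fzt z0 t0 - ftz z0 t0\<bar> / 2"
  have e: "e > 0" using ne unfolding e_def by simp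
  obtain d1 where d1: "d1 > 0" "\<forall>y s. \<bar>y - z0\<bar> < d1 \<longrightarrow> \<bar>s - t0\<bar> < d1 \<longrightarrow> s \<in> I \<and> \<bar>ftz y s - ftz z0 t0\<bar> < e"
    using cont2[OF c1 I e] by blast
  obtain d2 where d2: "d2 > 0" "\<forall>y s. \<bar>y - z0\<bar> < d2 \<longrightarrow> \<bar>s - t0\<bar> < d2 \<longrightarrow> s \<in> I \<and> \<bar>fzt y s - fzt z0 t0\<bar> < e"
    using cont2[OF c2 I e] by blast
  define h where "h = min d1 d2 / 2"
  have h: "h > 0" "h < d1" "h < d2" unfolding h_def using d1 d2 by auto
  have inI: "s \<in> I" if "t0 \<le> s" "s \<le> t0 + h" for s
  proof -
    have "\<bar>s - t0\<bar> < d1" using h that by auto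
    thus ?thesis using d1(2)[rule_format, of z0 s] d1(1) by auto
  qed
  define \<Delta> where "\<Delta> = f (z0+h) (t0+h) - f (z0+h) t0 - f z0 (t0+h) + f z0 t0"
  obtain \<tau> where \<tau>: "t0 < \<tau>" "\<tau> < t0 + h"
    "(\<lambda>s. f (z0+h) s - f z0 s) (t0+h) - (\<lambda>s. f (z0+h) s - f z0 s) t0 = (t0 + h - t0) * (ft (z0+h) \<tau> - ft z0 \<tau>)"
  proof -
    have "\<And>x. t0 \<le> x \<Longrightarrow> x \<le> t0+h \<Longrightarrow> ((\<lambda>s. f (z0+h) s - f z0 s) has_real_derivative (\<lambda>s. ft (z0+h) s - ft z0 s) x) (at x)"
      by (auto intro!: derivative_eq_intros dt inI)
    from MVT2[of t0 "t0+h", OF _ this] h show ?thesis using that by auto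
  qed
  obtain \<xi> where \<xi>: "z0 < \<xi>" "\<xi> < z0 + h" "ft (z0+h) \<tau> - ft z0 \<tau> = (z0 + h - z0) * ftz \<xi> \<tau>"
  proof -
    have "\<tau> \<in> I" using inI \<tau> by auto
    hence "\<And>x. z0 \<le> x \<Longrightarrow> x \<le> z0+h \<Longrightarrow> ((\<lambda>y. ft y \<tau>) has_real_derivative ftz x \<tau>) (at x)"
      by (auto intro!: dtz)
    from MVT2[of z0 "z0+h", OF _ this] h show ?thesis using that by auto
  qed
  obtain \<xi>' where \<xi>': "z0 < \<xi>'" "\<xi>' < z0 + h"
    "(\<lambda>y. f y (t0+h) - f y t0) (z0+h) - (\<lambda>y. f y (t0+h) - f y t0) z0 = (z0 + h - z0) * (fz \<xi>' (t0+h) - fz \<xi>' t0)"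
  proof -
    have "\<And>x. z0 \<le> x \<Longrightarrow> x \<le> z0+h \<Longrightarrow> ((\<lambda>y. f y (t0+h) - f y t0) has_real_derivative (\<lambda>y. fz y (t0+h) - fz y t0) x) (at x)"
      using h by (auto intro!: derivative_eq_intros dz inI)
    from MVT2[of z0 "z0+h", OF _ this] h show ?thesis using that by auto
  qed
  obtain \<tau>' where \<tau>': "t0 < \<tau>'" "\<tau>' < t0 + h" "fz \<xi>' (t0+h) - fz \<xi>' t0 = (t0 + h - t0) * fzt \<xi>' \<tau>'"
  proof -
    have "\<And>x. t0 \<le> x \<Longrightarrow> x \<le> t0+h \<Longrightarrow> ((\<lambda>s. fz \<xi>' s) has_real_derivative fzt \<xi>' x) (at x)"
      by (auto intro!: dzt inI)
    from MVT2[of t0 "t0+h", OF _ this] h show ?thesis using that by auto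
  qed
  have "\<Delta> = h * (h * ftz \<xi> \<tau>)" using \<tau>(3) \<xi>(3) unfolding \<Delta>_def by (simp add: algebra_simps)
  moreover have "\<Delta> = h * (h * fzt \<xi>' \<tau>')" using \<tau>'(3) \<xi>'(3) unfolding \<Delta>_def by (simp add: algebra_simps)
  ultimately have eq: "ftz \<xi> \<tau> = fzt \<xi>' \<tau>'" using h by simp
  have "\<bar>ftz \<xi> \<tau> - ftz z0 t0\<bar> < e" using d1(2) \<xi> \<tau> h by auto
  moreover have "\<bar>fzt \<xi>' \<tau>' - fzt z0 t0\<bar> < e" using d2(2) \<xi>' \<tau>' h by auto
  ultimately show False using eq unfolding e_def using tri_aux by blast
qed

lemma crit_min:
  fixes g g' :: "real \<Rightarrow> real"
  assumes min: "\<forall>y. g z0 \<le> g y" and d1: "\<And>y. (g has_real_derivative g' y) (at y)"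
    and d2: "(g' has_real_derivative g2) (at z0)"
  shows "g' z0 = 0 \<and> 0 \<le> g2"
proof
  show g0: "g' z0 = 0" using DERIV_local_min[OF d1[of z0], of 1] min by auto
  show "0 \<le> g2"
  proof (rule ccontr)
    assume "\<not> 0 \<le> g2"
    then obtain d where d: "d > 0" "\<And>h. 0 < h \<Longrightarrow> h < d \<Longrightarrow> g' z0 < g' (z0 - h)"
      using DERIV_neg_dec_left[OF d2] by force
    obtain \<xi> where \<xi>: "z0 - d/2 < \<xi>" "\<xi> < z0" "g z0 - g (z0 - d/2) = (z0 - (z0 - d/2)) * g' \<xi>"
      using MVT2[of "z0 - d/2" z0 g g'] d d1 by auto
    have "g' z0 < g' (z0 - (z0 - \<xi>))" by (rule d(2)) (use \<xi> in auto)
    hence "0 < g' \<xi>" using g0 by simp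
    hence "g (z0 - d/2) < g z0" using \<xi>(3) d by (simp add: algebra_simps) (smt (verit) mult_pos_pos)
    thus False using min by (meson not_le)
  qed
qed

lemma sd_der:
  assumes f: "smooth_strip T f" and ph: "smooth_strip T \<phi>" and t: "t \<in> tint T" and p: "\<phi> z t \<noteq> 0"
  shows "((\<lambda>y. sd \<phi> f y t) has_real_derivative
     (pz (pz f) z t * \<phi> z t - pz f z t * pz \<phi> z t) / (\<phi> z t)^2) (at z)"
  unfolding sd_def
  by (rule derivative_eq_intros ss_dz[OF ss_pz[OF f] t] ss_dz[OF ph t] p refl)+
     (simp add: power2_eq_square)

lemma sdsd_eq:
  assumes f: "smooth_strip T f" and ph: "smooth_strip T \<phi>" and t: "t \<in> tint T" and p: "\<phi> z t \<noteq> 0"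
  shows "sd \<phi> (sd \<phi> f) z t = (pz (pz f) z t * \<phi> z t - pz f z t * pz \<phi> z t) / (\<phi> z t)^3"
proof -
  have "pz (sd \<phi> f) z t = (pz (pz f) z t * \<phi> z t - pz f z t * pz \<phi> z t) / (\<phi> z t)^2"
    unfolding pz_def[of "sd \<phi> f"] by (rule DERIV_imp_deriv[OF sd_der[OF f ph t p]])
  thus ?thesis using p by (simp add: sd_def[of _ "sd \<phi> f"] power3_eq_cube power2_eq_square)
qed

lemma der_q3:
  assumes d1: "(A has_real_derivative A') (at z)" and d2: "(B has_real_derivative B') (at z)"
   and d3: "(C has_real_derivative C') (at z)" and d4: "(E has_real_derivative E') (at z)" and p: "B z \<noteq> 0"
  shows "((\<lambda>y. (A y * B y - C y * E y) / (B y)^3) has_real_derivative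
     (A' * B z + A z * B' - C' * E z - C z * E') / (B z)^3 - 3 * B' * (A z * B z - C z * E z) / (B z)^4) (at z)"
  apply (rule derivative_eq_intros d1 d2 d3 d4 refl)+
  using p apply simp
  using p by (simp add: field_simps power2_eq_square power3_eq_cube power4_eq_xxxx)

lemma sdsd_der:
  assumes f: "smooth_strip T f" and ph: "smooth_strip T \<phi>" and t: "t \<in> tint T" and p: "\<forall>y. \<phi> y t \<noteq> 0"
  shows "((\<lambda>y. sd \<phi> (sd \<phi> f) y t) has_real_derivative
     (pz (pz (pz f)) z t * \<phi> z t - pz f z t * pz (pz \<phi>) z t) / (\<phi> z t)^3
     - 3 * pz \<phi> z t * (pz (pz f) z t * \<phi> z t - pz f z t * pz \<phi> z t) / (\<phi> z t)^4) (at z)"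
proof -
  have e: "(\<lambda>y. sd \<phi> (sd \<phi> f) y t) = (\<lambda>y. (pz (pz f) y t * \<phi> y t - pz f y t * pz \<phi> y t) / (\<phi> y t)^3)"
    using sdsd_eq[OF f ph t] p by auto
  have "((\<lambda>y. (pz (pz f) y t * \<phi> y t - pz f y t * pz \<phi> y t) / (\<phi> y t)^3) has_real_derivative
     (pz (pz (pz f)) z t * \<phi> z t + pz (pz f) z t * pz \<phi> z t - pz (pz f) z t * pz \<phi> z t - pz f z t * pz (pz \<phi>) z t) / (\<phi> z t)^3
     - 3 * pz \<phi> z t * (pz (pz f) z t * \<phi> z t - pz f z t * pz \<phi> z t) / (\<phi> z t)^4) (at z)"
    by (rule der_q3[OF ss_dz[OF ss_pz[OF ss_pz[OF f]] t] ss_dz[OF ph t] ss_dz[OF ss_pz[OF f] t]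
        ss_dz[OF ss_pz[OF ph] t]]) (use p in auto)
  thus ?thesis unfolding e by simp
qed

definition good :: "ereal \<Rightarrow> (real \<Rightarrow> real \<Rightarrow> real) \<Rightarrow> bool" where
  "good T f \<longleftrightarrow> smooth_strip T f \<and> (\<forall>z. \<forall>t\<in>tint T. 0 < f z t \<and> f (z + 2*pi) t = f z t)"

definition evo :: "ereal \<Rightarrow> (real \<Rightarrow> real \<Rightarrow> real) \<Rightarrow> (real \<Rightarrow> real \<Rightarrow> real) \<Rightarrow> (real \<Rightarrow> real \<Rightarrow> real)
   \<Rightarrow> (real \<Rightarrow> real \<Rightarrow> real) \<Rightarrow> bool" where
  "evo T \<phi> f g h \<longleftrightarrow> (\<forall>z. \<forall>t\<in>tint T. ((\<lambda>s. f z s) has_real_derivative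
     (sd \<phi> (sd \<phi> f) z t + sd \<phi> f z t * (sd \<phi> g z t / g z t + sd \<phi> h z t / h z t)
       - 2 * Gf (f z t) (g z t) (h z t))) (at t within tint T))"

lemma cont_p: "smooth_strip T f \<Longrightarrow> continuous_on (UNIV \<times> tint T) (\<lambda>p. f (fst p) (snd p))"
  using ss_cont[of T f] by (simp add: case_prod_unfold)

lemma cont_sd: "smooth_strip T f \<Longrightarrow> good T \<phi> \<Longrightarrow> continuous_on (UNIV \<times> tint T) (\<lambda>p. sd \<phi> f (fst p) (snd p))"
  unfolding sd_def good_def
  by (intro continuous_intros cont_p ss_pz) (auto simp: less_imp_neq[symmetric])

lemma pair_pres:
  assumes T0: "0 < T" and gp: "good T \<phi>" and gf: "good T f" and gg: "good T g" and gh: "good T h"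
    and ef: "evo T \<phi> f g h" and eg: "evo T \<phi> g f h"
    and init: "\<forall>z. f z 0 \<le> g z 0"
  shows "\<forall>z. \<forall>t\<in>tint T. f z t \<le> g z t"
proof -
  define w where "w = (\<lambda>z t. g z t - f z t)"
  define \<kappa> where "\<kappa> = (\<lambda>z t. (sd \<phi> f z t)^2/(f z t * g z t)
     - 2 * Pp (f z t) (g z t) (h z t)/((f z t)^2*(g z t)^2*(h z t)^2) + 1)"
  have sf: "smooth_strip T f" and sg: "smooth_strip T g" and sh: "smooth_strip T h" and sp: "smooth_strip T \<phi>"
    using gf gg gh gp by (auto simp: good_def)
  have pos: "\<And>z t. t \<in> tint T \<Longrightarrow> 0 < f z t \<and> 0 < g z t \<and> 0 < h z t \<and> 0 < \<phi> z t"
    using gf gg gh gp by (auto simp: good_def)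
  have cw: "continuous_on (UNIV \<times> tint T) (\<lambda>(z,t). w z t)"
    unfolding w_def case_prod_unfold by (intro continuous_intros cont_p sf sg)
  have ck: "continuous_on (UNIV \<times> tint T) (\<lambda>(z,t). \<kappa> z t)"
  proof -
    have nz: "\<forall>p\<in>UNIV \<times> tint T. f (fst p) (snd p) \<noteq> 0 \<and> g (fst p) (snd p) \<noteq> 0 \<and> h (fst p) (snd p) \<noteq> 0"
      using pos by (metis SigmaE less_irrefl prod.sel)
    have "continuous_on (UNIV \<times> tint T) (\<lambda>p. (sd \<phi> f (fst p) (snd p))^2/(f (fst p) (snd p) * g (fst p) (snd p))
     - 2 * Pp (f (fst p) (snd p)) (g (fst p) (snd p)) (h (fst p) (snd p))/((f (fst p) (snd p))^2*(g (fst p) (snd p))^2*(h (fst p) (snd p))^2) + 1)"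
      unfolding Pp_def
      by (intro continuous_intros cont_p cont_sd sf sg sh gp; use nz in simp)
    thus ?thesis unfolding \<kappa>_def case_prod_unfold .
  qed
  have per: "\<forall>z. \<forall>t\<in>tint T. w (z + 2*pi) t = w z t"
    using gf gg by (auto simp: good_def w_def)
  have i0: "\<forall>z. 0 \<le> w z 0" using init by (simp add: w_def)
  have step: "\<forall>z t. t \<in> tint T \<longrightarrow> 0 < t \<longrightarrow> (\<forall>y. w z t \<le> w y t) \<longrightarrow> w z t < 0 \<longrightarrow>
        (\<exists>D. ((\<lambda>s. w z s) has_real_derivative D) (at t) \<and> \<kappa> z t * w z t < D)"
  proof (intro allI impI)
    fix z0 t0 assume t0: "t0 \<in> tint T" "0 < t0" and mn: "\<forall>y. w z0 t0 \<le> w y t0" and neg: "w z0 t0 < 0"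
    have df: "((\<lambda>s. f z0 s) has_real_derivative
     (sd \<phi> (sd \<phi> f) z0 t0 + sd \<phi> f z0 t0 * (sd \<phi> g z0 t0 / g z0 t0 + sd \<phi> h z0 t0 / h z0 t0)
       - 2 * Gf (f z0 t0) (g z0 t0) (h z0 t0))) (at t0)"
      using ef t0(1) unfolding evo_def by (simp add: at_tint[OF t0, symmetric])
    have dg: "((\<lambda>s. g z0 s) has_real_derivative
     (sd \<phi> (sd \<phi> g) z0 t0 + sd \<phi> g z0 t0 * (sd \<phi> f z0 t0 / f z0 t0 + sd \<phi> h z0 t0 / h z0 t0)
       - 2 * Gf (g z0 t0) (f z0 t0) (h z0 t0))) (at t0)"
      using eg t0(1) unfolding evo_def by (simp add: at_tint[OF t0, symmetric])
    have d1: "\<And>y. ((\<lambda>y. w y t0) has_real_derivative (\<lambda>y. pz g y t0 - pz f y t0) y) (at y)"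
      unfolding w_def by (auto intro!: derivative_eq_intros ss_dz[OF sf t0(1)] ss_dz[OF sg t0(1)])
    have d2: "((\<lambda>y. pz g y t0 - pz f y t0) has_real_derivative (pz (pz g) z0 t0 - pz (pz f) z0 t0)) (at z0)"
      by (auto intro!: derivative_eq_intros ss_dz[OF ss_pz[OF sf] t0(1)] ss_dz[OF ss_pz[OF sg] t0(1)])
    have cm: "(pz g z0 t0 - pz f z0 t0) = 0 \<and> 0 \<le> pz (pz g) z0 t0 - pz (pz f) z0 t0"
      using crit_min[OF mn d1 d2] by simp
    have p0: "\<forall>y. \<phi> y t0 \<noteq> 0" using pos t0 by (metis less_irrefl)
    note P = pos[OF t0(1), of z0]
    have ineq: "\<kappa> z0 t0 * w z0 t0 <
      (sd \<phi> (sd \<phi> g) z0 t0 + sd \<phi> g z0 t0 * (sd \<phi> f z0 t0 / f z0 t0 + sd \<phi> h z0 t0 / h z0 t0)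
       - 2 * Gf (g z0 t0) (f z0 t0) (h z0 t0)) -
      (sd \<phi> (sd \<phi> f) z0 t0 + sd \<phi> f z0 t0 * (sd \<phi> g z0 t0 / g z0 t0 + sd \<phi> h z0 t0 / h z0 t0)
       - 2 * Gf (f z0 t0) (g z0 t0) (h z0 t0))"
      unfolding \<kappa>_def w_def sdsd_eq[OF sf sp t0(1) p0[rule_format]] sdsd_eq[OF sg sp t0(1) p0[rule_format]]
      unfolding sd_def
      by (rule pair_alg[where P="\<phi> z0 t0" and Fz="f z0 t0" and Gz="g z0 t0" and Hz="h z0 t0"
           and Fo="pz f z0 t0" and Go="pz g z0 t0" and Ft="pz (pz f) z0 t0" and Gt="pz (pz g) z0 t0"
           and Po="pz \<phi> z0 t0" and Ho="pz h z0 t0"]) (use P cm neg in \<open>auto simp: w_def\<close>)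
    show "\<exists>D. ((\<lambda>s. w z0 s) has_real_derivative D) (at t0) \<and> \<kappa> z0 t0 * w z0 t0 < D"
      unfolding w_def using DERIV_diff[OF dg df] ineq unfolding w_def by blast
  qed
  have "\<forall>z. \<forall>t\<in>tint T. 0 \<le> w z t" by (rule minp[OF T0 cw ck per i0 step])
  thus ?thesis by (simp add: w_def)
qed

lemma Nquad:
  fixes a b c l :: real
  assumes a: "0 < a" and ab: "a \<le> b" and bc: "b \<le> c" and l: "1 < l" and cl: "l * a < c"
  shows "0 < c * (c^4 - (a^2 - b^2)^2) - l * a * (a^4 - (b^2 - c^2)^2)"
proof -
  define N where "N = (\<lambda>s. c^5 - c * (a^2 - s)^2 - l * a^5 + l * a * (s - c^2)^2)"
  have eqN: "c * (c^4 - (a^2 - b^2)^2) - l * a * (a^4 - (b^2 - c^2)^2) = N (b^2)"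
    unfolding N_def by (simp add: algebra_simps power2_eq_square power4_eq_xxxx)
      (simp add: power_def numeral_eq_Suc algebra_simps)
  define s1 where "s1 = a^2"
  define s2 where "s2 = c^2"
  define s where "s = b^2"
  have id: "(s2 - s1) * N s = (s2 - s) * N s1 + (s - s1) * N s2 + (s2 - s1) * (c - l * a) * (s - s1) * (s2 - s)"
    unfolding N_def by algebra
  have la: "a < l * a" using a l by simp
  have ac: "a < c" using la cl by simp
  have c0: "0 < c" using a ac by simp
  have s12: "s1 < s2" unfolding s1_def s2_def using a ac by (simp add: power_strict_mono)
  have ss1: "s1 \<le> s" unfolding s1_def s_def using a ab by (simp add: power_mono)
  have ss2: "s \<le> s2" unfolding s2_def s_def using a ab bc by (simp add: power_mono)
  have lp: "l * a^5 < c^5"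
  proof -
    have "l * a^5 \<le> l^5 * a^5"
    proof -
      have "l \<le> l^5" using l by (metis less_imp_le one_le_power power_one_right power_increasing
            zero_less_numeral numeral_le_iff semiring_norm(68) one_le_numeral) 
      thus ?thesis using a by (simp add: mult_right_mono)
    qed
    also have "\<dots> = (l*a)^5" by (simp add: power_mult_distrib)
    also have "\<dots> < c^5" using cl a l by (intro power_strict_mono) auto
    finally show ?thesis .
  qed
  have N1: "0 < N s1"
  proof -
    have "0 \<le> l * a * (s1 - c^2)^2" using a l by simp
    thus ?thesis unfolding N_def s1_def using lp by simp
  qed
  have N2: "0 < N s2"
  proof -
    have e: "N s2 = a^2 * (c * (2*c^2 - a^2) - l * a^3)"
      unfolding N_def s2_def by (simp add: algebra_simps power2_eq_square power3_eq_cube)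
        (simp add: power_def numeral_eq_Suc algebra_simps)
    have "l * a^3 \<le> l^3 * a^3"
    proof -
      have "l \<le> l^3" using l by (simp add: power3_eq_cube) (metis less_imp_le mult_le_cancel_left1 one_le_power
            power2_eq_square less_trans zero_less_one)
      thus ?thesis using a by (simp add: mult_right_mono)
    qed
    also have "\<dots> = (l*a)^3" by (simp add: power_mult_distrib)
    also have "\<dots> < c^3" using cl a l by (intro power_strict_mono) auto
    also have "c^3 \<le> c * (2*c^2 - a^2)"
    proof -
      have "a^2 \<le> c^2" using a ac by (simp add: power_mono)
      hence "c^2 \<le> 2*c^2 - a^2" by simp
      thus ?thesis using c0 by (simp add: power3_eq_cube power2_eq_square)
    qed
    finally show ?thesis unfolding e using a by simp
  qed
  have "0 < (s2 - s) * N s1 + (s - s1) * N s2"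
  proof (cases "s = s2")
    case True thus ?thesis using s12 N2 by simp
  next
    case False
    hence "0 < (s2 - s) * N s1" using ss2 N1 by simp
    moreover have "0 \<le> (s - s1) * N s2" using ss1 N2 by simp
    ultimately show ?thesis by simp
  qed
  moreover have "0 \<le> (s2 - s1) * (c - l * a) * (s - s1) * (s2 - s)"
    using s12 cl ss1 ss2 by simp
  ultimately have "0 < (s2 - s1) * N s" unfolding id by simp
  hence "0 < N s" using s12 by (simp add: zero_less_mult_iff)
  thus ?thesis unfolding eqN s_def .
qed

lemma lam_alg:
  fixes P Az Ao At Bz Bo Cz Co Ct Po l :: real
  assumes "P > 0" "Az > 0" "Bz > 0" "Cz > 0" "Az \<le> Bz" "Bz \<le> Cz" "1 < l" "Co = l*Ao" "Ct \<le> l*At"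
    "l*Az - Cz < 0"
  shows "l*(Ao/P)^2/(Az*Cz) * (l*Az - Cz) <
    l*((At*P - Ao*Po)/P^3 + (Ao/P)*(Bo/P/Bz + Co/P/Cz) - 2*Gf Az Bz Cz)
    - ((Ct*P - Co*Po)/P^3 + (Co/P)*(Ao/P/Az + Bo/P/Bz) - 2*Gf Cz Az Bz)"
proof -
  have e1: "l*((At*P - Ao*Po)/P^3) - (Ct*P - Co*Po)/P^3 = (l*At - Ct)/P^2"
    using assms by (simp add: field_simps power3_eq_cube power2_eq_square)
  have e2: "l*((Ao/P)*(Bo/P/Bz + Co/P/Cz)) - (Co/P)*(Ao/P/Az + Bo/P/Bz) = l*(Ao/P)^2/(Az*Cz)*(l*Az - Cz)"
    using assms by (simp add: field_simps power2_eq_square)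
  have e3: "Gf Cz Az Bz - l*Gf Az Bz Cz =
     (Cz * (Cz^4 - (Az^2 - Bz^2)^2) - l * Az * (Az^4 - (Bz^2 - Cz^2)^2)) / (Az^2*Bz^2*Cz^2)"
    unfolding Gf_def using assms by (simp add: field_simps power2_eq_square)
  have "0 < Cz * (Cz^4 - (Az^2 - Bz^2)^2) - l * Az * (Az^4 - (Bz^2 - Cz^2)^2)"
    by (rule Nquad) (use assms in auto)
  hence g: "0 < Gf Cz Az Bz - l*Gf Az Bz Cz" unfolding e3 using assms by simp
  have "0 \<le> (l*At - Ct)/P^2" using assms by simp
  thus ?thesis using e1 e2 g by (simp add: algebra_simps)
qed

lemma lam_pres:
  assumes T0: "0 < T" and gp: "good T \<phi>" and ga: "good T a" and gb: "good T b" and gc: "good T c"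
    and ea: "evo T \<phi> a b c" and ec: "evo T \<phi> c a b"
    and ord: "\<forall>z. \<forall>t\<in>tint T. a z t \<le> b z t \<and> b z t \<le> c z t"
    and l: "1 < l"
    and init: "\<forall>z. c z 0 \<le> l * a z 0"
  shows "\<forall>z. \<forall>t\<in>tint T. c z t \<le> l * a z t"
proof -
  define w where "w = (\<lambda>z t. l * a z t - c z t)"
  define \<kappa> where "\<kappa> = (\<lambda>z t. l * (sd \<phi> a z t)^2/(a z t * c z t))"
  have sa: "smooth_strip T a" and sb: "smooth_strip T b" and sc: "smooth_strip T c" and sp: "smooth_strip T \<phi>"
    using ga gb gc gp by (auto simp: good_def)
  have pos: "\<And>z t. t \<in> tint T \<Longrightarrow> 0 < a z t \<and> 0 < b z t \<and> 0 < c z t \<and> 0 < \<phi> z t"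
    using ga gb gc gp by (auto simp: good_def)
  have cw: "continuous_on (UNIV \<times> tint T) (\<lambda>(z,t). w z t)"
    unfolding w_def case_prod_unfold by (intro continuous_intros cont_p sa sc)
  have ck: "continuous_on (UNIV \<times> tint T) (\<lambda>(z,t). \<kappa> z t)"
  proof -
    have nz: "\<forall>p\<in>UNIV \<times> tint T. a (fst p) (snd p) \<noteq> 0 \<and> c (fst p) (snd p) \<noteq> 0"
      using pos by (metis SigmaE less_irrefl prod.sel)
    have "continuous_on (UNIV \<times> tint T) (\<lambda>p. l * (sd \<phi> a (fst p) (snd p))^2/(a (fst p) (snd p) * c (fst p) (snd p)))"
      by (intro continuous_intros cont_p cont_sd sa sc gp; use nz in simp)
    thus ?thesis unfolding \<kappa>_def case_prod_unfold .
  qed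
  have per: "\<forall>z. \<forall>t\<in>tint T. w (z + 2*pi) t = w z t"
    using ga gc by (auto simp: good_def w_def)
  have i0: "\<forall>z. 0 \<le> w z 0" using init by (simp add: w_def)
  have step: "\<forall>z t. t \<in> tint T \<longrightarrow> 0 < t \<longrightarrow> (\<forall>y. w z t \<le> w y t) \<longrightarrow> w z t < 0 \<longrightarrow>
        (\<exists>D. ((\<lambda>s. w z s) has_real_derivative D) (at t) \<and> \<kappa> z t * w z t < D)"
  proof (intro allI impI)
    fix z0 t0 assume t0: "t0 \<in> tint T" "0 < t0" and mn: "\<forall>y. w z0 t0 \<le> w y t0" and neg: "w z0 t0 < 0"
    have da: "((\<lambda>s. a z0 s) has_real_derivative
     (sd \<phi> (sd \<phi> a) z0 t0 + sd \<phi> a z0 t0 * (sd \<phi> b z0 t0 / b z0 t0 + sd \<phi> c z0 t0 / c z0 t0)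
       - 2 * Gf (a z0 t0) (b z0 t0) (c z0 t0))) (at t0)"
      using ea t0(1) unfolding evo_def by (simp add: at_tint[OF t0, symmetric])
    have dc: "((\<lambda>s. c z0 s) has_real_derivative
     (sd \<phi> (sd \<phi> c) z0 t0 + sd \<phi> c z0 t0 * (sd \<phi> a z0 t0 / a z0 t0 + sd \<phi> b z0 t0 / b z0 t0)
       - 2 * Gf (c z0 t0) (a z0 t0) (b z0 t0))) (at t0)"
      using ec t0(1) unfolding evo_def by (simp add: at_tint[OF t0, symmetric])
    have d1: "\<And>y. ((\<lambda>y. w y t0) has_real_derivative (\<lambda>y. l * pz a y t0 - pz c y t0) y) (at y)"
      unfolding w_def by (auto intro!: derivative_eq_intros ss_dz[OF sa t0(1)] ss_dz[OF sc t0(1)])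
    have d2: "((\<lambda>y. l * pz a y t0 - pz c y t0) has_real_derivative (l * pz (pz a) z0 t0 - pz (pz c) z0 t0)) (at z0)"
      by (auto intro!: derivative_eq_intros ss_dz[OF ss_pz[OF sa] t0(1)] ss_dz[OF ss_pz[OF sc] t0(1)])
    have cm: "(l * pz a z0 t0 - pz c z0 t0) = 0 \<and> 0 \<le> l * pz (pz a) z0 t0 - pz (pz c) z0 t0"
      using crit_min[OF mn d1 d2] by simp
    have p0: "\<forall>y. \<phi> y t0 \<noteq> 0" using pos t0 by (metis less_irrefl)
    note P = pos[OF t0(1), of z0]
    have ineq: "\<kappa> z0 t0 * w z0 t0 <
      l * (sd \<phi> (sd \<phi> a) z0 t0 + sd \<phi> a z0 t0 * (sd \<phi> b z0 t0 / b z0 t0 + sd \<phi> c z0 t0 / c z0 t0)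
       - 2 * Gf (a z0 t0) (b z0 t0) (c z0 t0)) -
      (sd \<phi> (sd \<phi> c) z0 t0 + sd \<phi> c z0 t0 * (sd \<phi> a z0 t0 / a z0 t0 + sd \<phi> b z0 t0 / b z0 t0)
       - 2 * Gf (c z0 t0) (a z0 t0) (b z0 t0))"
      unfolding \<kappa>_def w_def sdsd_eq[OF sa sp t0(1) p0[rule_format]] sdsd_eq[OF sc sp t0(1) p0[rule_format]]
      unfolding sd_def
      by (rule lam_alg[where P="\<phi> z0 t0" and Az="a z0 t0" and Bz="b z0 t0" and Cz="c z0 t0"
           and Ao="pz a z0 t0" and Co="pz c z0 t0" and At="pz (pz a) z0 t0" and Ct="pz (pz c) z0 t0"
           and Po="pz \<phi> z0 t0" and Bo="pz b z0 t0"]) (use P cm neg ord t0 l in \<open>auto simp: w_def\<close>)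
    show "\<exists>D. ((\<lambda>s. w z0 s) has_real_derivative D) (at t0) \<and> \<kappa> z0 t0 * w z0 t0 < D"
      unfolding w_def using DERIV_diff[OF DERIV_cmult[OF da, of l] dc] ineq unfolding w_def by blast
  qed
  have "\<forall>z. \<forall>t\<in>tint T. 0 \<le> w z t" by (rule minp[OF T0 cw ck per i0 step])
  thus ?thesis by (simp add: w_def)
qed

definition G1f :: "real \<Rightarrow> real \<Rightarrow> real \<Rightarrow> real" where
  "G1f x y z = 3*x^2/(y^2*z^2) + (y^2-z^2)^2/(x^2*y^2*z^2)"
definition G2f :: "real \<Rightarrow> real \<Rightarrow> real \<Rightarrow> real" where
  "G2f x y z = -2*x^3/(y^3*z^2) - (2*y/z^2 - 2*z^2/y^3)/x"
definition G3f :: "real \<Rightarrow> real \<Rightarrow> real \<Rightarrow> real" where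
  "G3f x y z = -2*x^3/(y^2*z^3) - (2*z/y^2 - 2*y^2/z^3)/x"

lemma Gf_alt: "x > 0 \<Longrightarrow> y > 0 \<Longrightarrow> z > 0 \<Longrightarrow> Gf x y z = x^3/(y^2*z^2) - (y^2/z^2 - 2 + z^2/y^2)/x"
  unfolding Gf_def by (simp add: field_simps power2_eq_square power3_eq_cube power4_eq_xxxx) 

lemma Gf_der:
  assumes dF: "(F has_real_derivative F') (at w)" and dG: "(Gg has_real_derivative G') (at w)"
    and dH: "(H has_real_derivative H') (at w)"
    and pF: "\<forall>y. F y > 0" and pG: "\<forall>y. Gg y > 0" and pH: "\<forall>y. H y > 0"
  shows "((\<lambda>y. Gf (F y) (Gg y) (H y)) has_real_derivative
     G1f (F w) (Gg w) (H w) * F' + G2f (F w) (Gg w) (H w) * G' + G3f (F w) (Gg w) (H w) * H') (at w)"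
proof -
  have e: "(\<lambda>y. Gf (F y) (Gg y) (H y)) = (\<lambda>y. (F y)^3/((Gg y)^2*(H y)^2) - ((Gg y)^2/(H y)^2 - 2 + (H y)^2/(Gg y)^2)/F y)"
    using Gf_alt pF pG pH by auto
  have p: "F w > 0" "Gg w > 0" "H w > 0" using pF pG pH by auto
  have nz: "F w \<noteq> 0" "(Gg w)^2*(H w)^2 \<noteq> 0" "(H w)^2 \<noteq> 0" "(Gg w)^2 \<noteq> 0"
    using p by auto
  show ?thesis unfolding e
    apply (rule derivative_eq_intros dF dG dH refl nz)+
    unfolding G1f_def G2f_def G3f_def using p by (simp add: field_simps power2_eq_square power3_eq_cube)
qed

lemma sq_bound:
  fixes S p y g :: real
  assumes "S > 0" "y > 0"
  shows "S*(p^2/y^2) + 2*g*p \<ge> -(g^2*y^2)/S"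
proof -
  have "0 \<le> S*(p/y + g*y/S)^2" using assms by simp
  also have "S*(p/y + g*y/S)^2 = S*(p^2/y^2) + 2*g*p + g^2*y^2/S"
    using assms by (simp add: field_simps power2_eq_square)
  finally show ?thesis by (simp add: algebra_simps)
qed

lemma react:
  fixes x y z S p q :: real
  assumes x: "x > 0" and y: "y > 0" and z: "z > 0" and S: "S > 0"
    and V: "(y^2*z/x*G2f x y z)^2 + (y*z^2/x*G3f x y z)^2 < 6*S^2"
  shows "0 < S*(p^2/y^2 + q^2/z^2) + 2*(G1f x y z*S + G2f x y z*p + G3f x y z*q)"
proof -
  define g1 where "g1 = G1f x y z"
  define g2 where "g2 = G2f x y z"
  define g3 where "g3 = G3f x y z"
  define W where "W = (y^2*z/x*g2)^2 + (y*z^2/x*g3)^2"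
  define r where "r = x^2/(y^2*z^2)"
  have r0: "r > 0" unfolding r_def using x y z by simp
  have W: "W < 6*S^2" using V unfolding W_def g2_def g3_def .
  have a2: "S*(p^2/y^2) + 2*g2*p \<ge> -(g2^2*y^2)/S" by (rule sq_bound[OF S y])
  have a3: "S*(q^2/z^2) + 2*g3*q \<ge> -(g3^2*z^2)/S" by (rule sq_bound[OF S z])
  have g1b: "g1 \<ge> 3*r" unfolding g1_def G1f_def r_def using x y z by simp
  have eW: "g2^2*y^2 + g3^2*z^2 = W * r"
    unfolding W_def r_def using x y z by (simp add: field_simps power2_eq_square)
  have "S*(p^2/y^2 + q^2/z^2) + 2*(g1*S + g2*p + g3*q) \<ge> 2*g1*S - (g2^2*y^2 + g3^2*z^2)/S"
    using a2 a3 by (simp add: algebra_simps add_divide_distrib)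
  moreover have "2*g1*S \<ge> 6*r*S" using g1b S by simp
  moreover have "6*r*S - W*r/S > 0"
  proof -
    have "6*r*S - W*r/S = r/S * (6*S^2 - W)" using S by (simp add: field_simps power2_eq_square)
    thus ?thesis using r0 S W by simp
  qed
  ultimately show ?thesis unfolding g1_def[symmetric] g2_def[symmetric] g3_def[symmetric] eW by linarith
qed

lemma V2_eq: "x > 0 \<Longrightarrow> y > 0 \<Longrightarrow> z > 0 \<Longrightarrow>
  y^2*z/x*G2f x y z = 2*z^3/(x^2*y) - 2*x^2/(y*z) - 2*y^3/(x^2*z)"
  unfolding G2f_def by (simp add: field_simps power2_eq_square power3_eq_cube)

lemma V3_eq: "x > 0 \<Longrightarrow> y > 0 \<Longrightarrow> z > 0 \<Longrightarrow>
  y*z^2/x*G3f x y z = 2*y^3/(x^2*z) - 2*x^2/(y*z) - 2*z^3/(x^2*y)"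
  unfolding G3f_def by (simp add: field_simps power2_eq_square power3_eq_cube)

lemma sq_le: "-B \<le> (v::real) \<Longrightarrow> v \<le> B \<Longrightarrow> v^2 \<le> B^2"
  by (metis abs_le_iff abs_le_square_iff minus_le_iff abs_of_nonneg order.trans abs_ge_zero
      power2_abs)

lemma Vsum:
  fixes x y z A B C :: real
  assumes x: "x > 0" and y: "y > 0" and z: "z > 0"
    and al: "2*z^3/(x^2*y) \<le> A" and be: "2*x^2/(y*z) \<le> B" and ga: "2*y^3/(x^2*z) \<le> C"
    and b2: "A \<le> M2" "B + C \<le> M2" and b3: "C \<le> M3" and M: "M2^2 + M3^2 < 6*S^2"
    and ab: "2*z^3/(x^2*y) + 2*x^2/(y*z) \<le> M3"
  shows "(y^2*z/x*G2f x y z)^2 + (y*z^2/x*G3f x y z)^2 < 6*S^2"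
proof -
  define a where "a = 2*z^3/(x^2*y)"
  define b where "b = 2*x^2/(y*z)"
  define c where "c = 2*y^3/(x^2*z)"
  have p: "0 \<le> a" "0 \<le> b" "0 \<le> c" unfolding a_def b_def c_def using x y z by auto
  have "(y^2*z/x*G2f x y z)^2 \<le> M2^2"
    unfolding V2_eq[OF x y z] a_def[symmetric] b_def[symmetric] c_def[symmetric]
    by (rule sq_le) (use p al be ga b2 in \<open>auto simp: a_def b_def c_def\<close>)
  moreover have "(y*z^2/x*G3f x y z)^2 \<le> M3^2"
    unfolding V3_eq[OF x y z] a_def[symmetric] b_def[symmetric] c_def[symmetric]
    by (rule sq_le) (use p al be ga b3 ab in \<open>auto simp: a_def b_def c_def\<close>)
  ultimately show ?thesis using M by linarith
qed

lemma quart_b: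
  fixes x y z :: real
  assumes y: "0 < y" and yx: "y \<le> x" and xz: "x \<le> z" and zy: "z \<le> 2*y"
  shows "x^4 + z^4 \<le> 9*x^2*y*z"
proof (cases "z = y")
  case True
  hence "x = y" using yx xz by simp
  thus ?thesis using True y by (simp add: power4_eq_xxxx power2_eq_square)
next
  case False
  define f where "f = (\<lambda>u. u^2 - 9*(y*z)*u + z^4)"
  define s where "s = x^2"
  have id: "(z^2 - y^2) * f s = (z^2 - s) * f (y^2) + (s - y^2) * f (z^2) + (z^2 - y^2)*(s - y^2)*(s - z^2)"
    unfolding f_def by algebra
  have yz: "y < z" using False yx xz by simp
  have z0: "0 < z" using y yz by simp
  have s1: "y^2 \<le> s" unfolding s_def using y yx by (simp add: power_mono)
  have s2: "s \<le> z^2" unfolding s_def using y yx xz by (simp add: power_mono)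
  have yz2: "y^2 < z^2" using y yz by (simp add: power_strict_mono)
  have f1: "f (y^2) \<le> 0"
  proof -
    have "z^3 \<le> (2*y)^3" using z0 zy by (intro power_mono) auto
    hence "z^4 \<le> 8*y^3*z" using z0 by (simp add: power3_eq_cube power4_eq_xxxx algebra_simps)
    moreover have "y^4 \<le> y^3*z" using y yz by (simp add: power3_eq_cube power4_eq_xxxx)
    ultimately show ?thesis unfolding f_def by (simp add: power4_eq_xxxx power3_eq_cube power2_eq_square algebra_simps)
  qed
  have f2: "f (z^2) \<le> 0"
  proof -
    have "f (z^2) = z^3 * (2*z - 9*y)" unfolding f_def by (simp add: algebra_simps power4_eq_xxxx power3_eq_cube power2_eq_square)
    thus ?thesis using z0 zy y by (simp add: mult_nonneg_nonpos)
  qed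
  have t1: "(z^2 - s) * f (y^2) \<le> 0" by (rule mult_nonneg_nonpos) (use s2 f1 in auto)
  have t2: "(s - y^2) * f (z^2) \<le> 0" by (rule mult_nonneg_nonpos) (use s1 f2 in auto)
  have t3: "(z^2 - y^2)*(s - y^2)*(s - z^2) \<le> 0"
    by (rule mult_nonneg_nonpos) (use s1 s2 yz2 in auto)
  have "(z^2 - y^2) * f s \<le> 0"
    unfolding id using t1 t2 t3 by linarith
  hence "f s \<le> 0" using yz2 by (simp add: mult_le_0_iff)
  thus ?thesis unfolding f_def s_def by (simp add: power4_eq_xxxx power2_eq_square algebra_simps)
qed

lemma caseA:
  fixes x y z S :: real
  assumes x: "0 < x" and xy: "x \<le> y" and yz: "y \<le> z" and zx: "z \<le> 2*x" and S: "10 \<le> S"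
  shows "(y^2*z/x*G2f x y z)^2 + (y*z^2/x*G3f x y z)^2 < 6*S^2"
proof -
  have y: "0 < y" and z: "0 < z" using x xy yz by auto
  have al: "2*z^3/(x^2*y) \<le> 16"
  proof -
    have "z^3 \<le> (2*x)^3" using z zx by (intro power_mono) auto
    also have "(2*x)^3 = 8*x^2*x" by (simp add: power3_eq_cube power2_eq_square)
    also have "\<dots> \<le> 8*x^2*y" using xy x by simp
    finally show ?thesis using x y by (simp add: pos_divide_le_eq algebra_simps)
  qed
  have be: "2*x^2/(y*z) \<le> 2"
  proof -
    have "x*x \<le> y*z" using x xy yz by (intro mult_mono) auto
    thus ?thesis using y z by (simp add: pos_divide_le_eq power2_eq_square)
  qed
  have ga: "2*y^3/(x^2*z) \<le> 8"
  proof -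
    have "y*y \<le> (2*x)*(2*x)" using y yz zx by (intro mult_mono) auto
    hence "y^2*y \<le> (4*x^2)*z" using y yz by (intro mult_mono) (auto simp: power2_eq_square)
    thus ?thesis using x z by (simp add: pos_divide_le_eq power3_eq_cube power2_eq_square algebra_simps)
  qed
  have S2: "600 \<le> 6*S^2"
  proof -
    have "10^2 \<le> S^2" using S by (intro power_mono) auto
    thus ?thesis by simp
  qed
  show ?thesis
    by (rule Vsum[OF x y z al be ga, of 16 18]) (use al be S2 in auto)
qed

lemma caseB:
  fixes x y z S :: real
  assumes y: "0 < y" and yx: "y \<le> x" and xz: "x \<le> z" and zy: "z \<le> 2*y" and S: "10 \<le> S"
  shows "(y^2*z/x*G2f x y z)^2 + (y*z^2/x*G3f x y z)^2 < 6*S^2"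
proof -
  have x: "0 < x" and z: "0 < z" using y yx xz by auto
  have al: "2*z^3/(x^2*y) \<le> 16"
  proof -
    have "z^3 \<le> (2*y)^3" using z zy by (intro power_mono) auto
    also have "(2*y)^3 = 8*(y*y)*y" by (simp add: power3_eq_cube)
    also have "\<dots> \<le> 8*(x*x)*y" using yx y by (simp add: mult_mono)
    finally show ?thesis using x y by (simp add: pos_divide_le_eq power2_eq_square)
  qed
  have be: "2*x^2/(y*z) \<le> 4"
  proof -
    have "x*x \<le> (2*y)*z" using x xz zy by (intro mult_mono) auto
    thus ?thesis using y z by (simp add: pos_divide_le_eq power2_eq_square)
  qed
  have ga: "2*y^3/(x^2*z) \<le> 2"
  proof -
    have "y*y \<le> x*x" using y yx by (intro mult_mono) auto
    hence "(y*y)*y \<le> (x*x)*z" using y yx xz by (intro mult_mono) auto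
    thus ?thesis using x z by (simp add: pos_divide_le_eq power3_eq_cube power2_eq_square)
  qed
  have ab: "2*z^3/(x^2*y) + 2*x^2/(y*z) \<le> 18"
  proof -
    have e: "2*z^3/(x^2*y) + 2*x^2/(y*z) = 2*(x^4 + z^4)/(x^2*y*z)"
      using x y z by (simp add: field_simps power2_eq_square power3_eq_cube power4_eq_xxxx)
    have "x^4 + z^4 \<le> 9*x^2*y*z" by (rule quart_b[OF y yx xz zy])
    thus ?thesis unfolding e using x y z by (simp add: pos_divide_le_eq)
  qed
  have S2: "600 \<le> 6*S^2"
  proof -
    have "10^2 \<le> S^2" using S by (intro power_mono) auto
    thus ?thesis by simp
  qed
  show ?thesis
    by (rule Vsum[OF x y z al be ga, of 16 18]) (use ab S2 in auto)
qed

lemma caseC: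
  fixes x y z S :: real
  assumes y: "0 < y" and yz: "y \<le> z" and zx: "z \<le> x" and xy: "x \<le> 2*y" and S: "10 \<le> S"
  shows "(y^2*z/x*G2f x y z)^2 + (y*z^2/x*G3f x y z)^2 < 6*S^2"
proof -
  have x: "0 < x" and z: "0 < z" using y yz zx by auto
  have al: "2*z^3/(x^2*y) \<le> 4"
  proof -
    have "z*z \<le> x*x" using z zx by (intro mult_mono) auto
    hence "(z*z)*z \<le> (x*x)*(2*y)" using z zx xy yz by (intro mult_mono) auto
    thus ?thesis using x y by (simp add: pos_divide_le_eq power3_eq_cube power2_eq_square algebra_simps)
  qed
  have be: "2*x^2/(y*z) \<le> 8"
  proof -
    have "x*x \<le> (2*y)*(2*z)" using x xy yz by (intro mult_mono) auto
    thus ?thesis using y z by (simp add: pos_divide_le_eq power2_eq_square)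
  qed
  have ga: "2*y^3/(x^2*z) \<le> 2"
  proof -
    have "y*y \<le> x*x" using y yz zx by (intro mult_mono) auto
    hence "(y*y)*y \<le> (x*x)*z" using y yz zx by (intro mult_mono) auto
    thus ?thesis using x z by (simp add: pos_divide_le_eq power3_eq_cube power2_eq_square)
  qed
  have S2: "600 \<le> 6*S^2"
  proof -
    have "10^2 \<le> S^2" using S by (intro power_mono) auto
    thus ?thesis by simp
  qed
  show ?thesis
    by (rule Vsum[OF x y z al be ga, of 10 12]) (use al be S2 in auto)
qed

lemma dtu_alg:
  fixes P Po Pt Xz Xo Xt Xh Yz Yo Yt Zz Zo Zt g1 g2 g3 :: real
  assumes p: "P > 0" "Xz > 0" "Yz > 0" "Zz > 0" and crit: "Xt*P - Xo*Po = 0"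
  shows "((((Xh*P - Xo*Pt)/P^3 - 3*Po*(Xt*P - Xo*Po)/P^4) +
      (((Xt*P - Xo*Po)/P^2) * ((Yo/P)/Yz + (Zo/P)/Zz) +
       ((((Yt*P - Yo*Po)/P^2)*Yz - (Yo/P)*Yo)/(Yz*Yz) + (((Zt*P - Zo*Po)/P^2)*Zz - (Zo/P)*Zo)/(Zz*Zz)) * (Xo/P))
      - 2*(g1*Xo + g2*Yo + g3*Zo)) * P
     - Xo * (P * ((Xt*P - Xo*Po)/P^3/Xz + (Yt*P - Yo*Po)/P^3/Yz + (Zt*P - Zo*Po)/P^3/Zz))) / (P*P)
   = (Xh*P - Xo*Pt)/P^4 - (Xo/P)*((Yo/P)^2/Yz^2 + (Zo/P)^2/Zz^2) - 2*(g1*(Xo/P) + g2*(Yo/P) + g3*(Zo/P))"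
proof -
  have c: "Xt*P - Xo*Po = 0" by (rule crit)
  show ?thesis unfolding c using p by (simp add: field_simps power2_eq_square power3_eq_cube power4_eq_xxxx)
qed

lemma open_I: "open {t \<in> tint T. 0 < t}"
  unfolding open_contains_ball using tint_ball by fastforce

lemma dtu_formula:
  assumes gp: "good T \<phi>" and gf: "good T f" and gg: "good T g" and gh: "good T h"
    and ef: "evo T \<phi> f g h"
    and ephi: "\<forall>z. \<forall>t\<in>tint T. ((\<lambda>s. \<phi> z s) has_real_derivative \<phi> z t *
        (sd \<phi> (sd \<phi> f) z t / f z t + sd \<phi> (sd \<phi> g) z t / g z t + sd \<phi> (sd \<phi> h) z t / h z t)) (at t within tint T)"
    and t0: "t0 \<in> tint T" "0 < t0"
    and crit: "pz (pz f) z0 t0 * \<phi> z0 t0 - pz f z0 t0 * pz \<phi> z0 t0 = 0"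
  shows "((\<lambda>s. sd \<phi> f z0 s) has_real_derivative
     (pz (pz (pz f)) z0 t0 * \<phi> z0 t0 - pz f z0 t0 * pz (pz \<phi>) z0 t0)/(\<phi> z0 t0)^4
     - sd \<phi> f z0 t0 * ((sd \<phi> g z0 t0)^2/(g z0 t0)^2 + (sd \<phi> h z0 t0)^2/(h z0 t0)^2)
     - 2*(G1f (f z0 t0) (g z0 t0) (h z0 t0) * sd \<phi> f z0 t0 + G2f (f z0 t0) (g z0 t0) (h z0 t0) * sd \<phi> g z0 t0
          + G3f (f z0 t0) (g z0 t0) (h z0 t0) * sd \<phi> h z0 t0)) (at t0)"
proof -
  have sf: "smooth_strip T f" and sg: "smooth_strip T g" and sh: "smooth_strip T h" and sp: "smooth_strip T \<phi>"
    using gf gg gh gp by (auto simp: good_def)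
  have pos: "\<And>z. 0 < f z t0 \<and> 0 < g z t0 \<and> 0 < h z t0 \<and> 0 < \<phi> z t0"
    using gf gg gh gp t0 by (auto simp: good_def)
  have p0: "\<forall>y. \<phi> y t0 \<noteq> 0" using pos by (metis less_irrefl)
  have nzg: "g z0 t0 \<noteq> 0" and nzh: "h z0 t0 \<noteq> 0" using pos[of z0] by auto
  define I where "I = {t \<in> tint T. 0 < t}"
  have I: "open I" "t0 \<in> I" unfolding I_def using open_I t0 by auto
  have sI: "\<And>s. s \<in> I \<Longrightarrow> s \<in> tint T \<and> 0 < s" unfolding I_def by auto
  have cl: "pt T (pz f) z0 t0 = pz (pt T f) z0 t0"
  proof (rule clairaut[OF I, where f=f and fz="pz f" and ft="pt T f" and ftz="pz (pt T f)" and fzt="pt T (pz f)"])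
    show "\<And>y s. s \<in> I \<Longrightarrow> ((\<lambda>y. f y s) has_real_derivative pz f y s) (at y)"
      using ss_dz[OF sf] sI by blast
    show "\<And>y s. s \<in> I \<Longrightarrow> ((\<lambda>s. f y s) has_real_derivative pt T f y s) (at s)"
      using ss_dt[OF sf] sI by blast
    show "\<And>y s. s \<in> I \<Longrightarrow> ((\<lambda>y. pt T f y s) has_real_derivative pz (pt T f) y s) (at y)"
      using ss_dz[OF ss_pt[OF sf]] sI by blast
    show "\<And>y s. s \<in> I \<Longrightarrow> ((\<lambda>s. pz f y s) has_real_derivative pt T (pz f) y s) (at s)"
      using ss_dt[OF ss_pz[OF sf]] sI by blast
    show "continuous_on (UNIV \<times> I) (\<lambda>(y, s). pz (pt T f) y s)"
      by (rule continuous_on_subset[OF ss_cont[OF ss_pz[OF ss_pt[OF sf]]]]) (auto simp: I_def)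
    show "continuous_on (UNIV \<times> I) (\<lambda>(y, s). pt T (pz f) y s)"
      by (rule continuous_on_subset[OF ss_cont[OF ss_pt[OF ss_pz[OF sf]]]]) (auto simp: I_def)
  qed
  define E where "E = (\<lambda>y. sd \<phi> (sd \<phi> f) y t0 + sd \<phi> f y t0 * (sd \<phi> g y t0 / g y t0 + sd \<phi> h y t0 / h y t0)
       - 2 * Gf (f y t0) (g y t0) (h y t0))"
  have ptE: "(\<lambda>y. pt T f y t0) = E"
  proof
    fix y
    have "((\<lambda>s. f y s) has_real_derivative E y) (at t0 within tint T)"
      using ef t0(1) unfolding evo_def E_def by blast
    thus "pt T f y t0 = E y" by (rule pt_eq[OF t0])
  qed
  note d_ssf = sdsd_der[OF sf sp t0(1) p0, of z0]
  note d_sf = sd_der[OF sf sp t0(1) p0[rule_format], of z0]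
  note d_sg = sd_der[OF sg sp t0(1) p0[rule_format], of z0]
  note d_sh = sd_der[OF sh sp t0(1) p0[rule_format], of z0]
  note d_g = ss_dz[OF sg t0(1), of z0]
  note d_h = ss_dz[OF sh t0(1), of z0]
  note d_G = Gf_der[OF ss_dz[OF sf t0(1), of z0] d_g d_h]
  define DEv where "DEv = (((pz (pz (pz f)) z0 t0 * \<phi> z0 t0 - pz f z0 t0 * pz (pz \<phi>) z0 t0) / (\<phi> z0 t0)^3
       - 3 * pz \<phi> z0 t0 * (pz (pz f) z0 t0 * \<phi> z0 t0 - pz f z0 t0 * pz \<phi> z0 t0) / (\<phi> z0 t0)^4) +
     (((pz (pz f) z0 t0 * \<phi> z0 t0 - pz f z0 t0 * pz \<phi> z0 t0) / (\<phi> z0 t0)^2) * (sd \<phi> g z0 t0 / g z0 t0 + sd \<phi> h z0 t0 / h z0 t0) +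
      ((((pz (pz g) z0 t0 * \<phi> z0 t0 - pz g z0 t0 * pz \<phi> z0 t0) / (\<phi> z0 t0)^2) * g z0 t0 - sd \<phi> g z0 t0 * pz g z0 t0) / (g z0 t0 * g z0 t0)
       + (((pz (pz h) z0 t0 * \<phi> z0 t0 - pz h z0 t0 * pz \<phi> z0 t0) / (\<phi> z0 t0)^2) * h z0 t0 - sd \<phi> h z0 t0 * pz h z0 t0) / (h z0 t0 * h z0 t0))
      * sd \<phi> f z0 t0)
     - 2 * (G1f (f z0 t0) (g z0 t0) (h z0 t0) * pz f z0 t0 + G2f (f z0 t0) (g z0 t0) (h z0 t0) * pz g z0 t0
          + G3f (f z0 t0) (g z0 t0) (h z0 t0) * pz h z0 t0))"
  have dE: "(E has_real_derivative DEv) (at z0)"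
    unfolding E_def DEv_def
    by (intro DERIV_diff DERIV_add DERIV_mult DERIV_divide DERIV_cmult d_ssf d_sf d_sg d_sh d_g d_h d_G)
       (use pos nzg nzh in auto)
  have pzE: "pz (pt T f) z0 t0 = DEv"
    unfolding pz_def ptE by (rule DERIV_imp_deriv[OF dE])
  have dX: "((\<lambda>s. pz f z0 s) has_real_derivative DEv) (at t0)"
    using ss_dt[OF ss_pz[OF sf] t0, of z0] unfolding cl pzE .
  define \<Sigma> where "\<Sigma> = sd \<phi> (sd \<phi> f) z0 t0 / f z0 t0 + sd \<phi> (sd \<phi> g) z0 t0 / g z0 t0 + sd \<phi> (sd \<phi> h) z0 t0 / h z0 t0"
  have dP: "((\<lambda>s. \<phi> z0 s) has_real_derivative \<phi> z0 t0 * \<Sigma>) (at t0)"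
    using ephi t0(1) unfolding \<Sigma>_def by (simp add: at_tint[OF t0, symmetric])
  have du: "((\<lambda>s. sd \<phi> f z0 s) has_real_derivative
      (DEv * \<phi> z0 t0 - pz f z0 t0 * (\<phi> z0 t0 * \<Sigma>)) / (\<phi> z0 t0 * \<phi> z0 t0)) (at t0)"
    unfolding sd_def by (rule DERIV_divide[OF dX dP]) (use p0 in auto)
  have eq: "(DEv * \<phi> z0 t0 - pz f z0 t0 * (\<phi> z0 t0 * \<Sigma>)) / (\<phi> z0 t0 * \<phi> z0 t0) =
     (pz (pz (pz f)) z0 t0 * \<phi> z0 t0 - pz f z0 t0 * pz (pz \<phi>) z0 t0)/(\<phi> z0 t0)^4
     - sd \<phi> f z0 t0 * ((sd \<phi> g z0 t0)^2/(g z0 t0)^2 + (sd \<phi> h z0 t0)^2/(h z0 t0)^2)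
     - 2*(G1f (f z0 t0) (g z0 t0) (h z0 t0) * sd \<phi> f z0 t0 + G2f (f z0 t0) (g z0 t0) (h z0 t0) * sd \<phi> g z0 t0
          + G3f (f z0 t0) (g z0 t0) (h z0 t0) * sd \<phi> h z0 t0)"
    unfolding DEv_def \<Sigma>_def
    unfolding sdsd_eq[OF sf sp t0(1) p0[rule_format]] sdsd_eq[OF sg sp t0(1) p0[rule_format]]
      sdsd_eq[OF sh sp t0(1) p0[rule_format]]
    unfolding sd_def
    by (rule dtu_alg) (use pos crit in auto)
  show ?thesis using du unfolding eq .
qed

lemma der_q2:
  assumes d1: "(A has_real_derivative A') (at z)" and d2: "(B has_real_derivative B') (at z)"
   and d3: "(C has_real_derivative C') (at z)" and d4: "(E has_real_derivative E') (at z)" and p: "B z \<noteq> 0"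
  shows "((\<lambda>y. (A y * B y - C y * E y) / (B y)^2) has_real_derivative
     (A' * B z + A z * B' - C' * E z - C z * E') / (B z)^2 - 2 * B' * (A z * B z - C z * E z) / (B z)^3) (at z)"
  apply (rule derivative_eq_intros d1 d2 d3 d4 refl)+
  using p apply simp
  using p by (simp add: field_simps power2_eq_square power3_eq_cube)

lemma pz_per:
  assumes gf: "good T f" and t: "t \<in> tint T"
  shows "pz f (z + 2*pi) t = pz f z t"
proof -
  have sf: "smooth_strip T f" using gf by (simp add: good_def)
  have d: "((\<lambda>y. f y t) has_real_derivative pz f (z + 2*pi) t) (at (z + 2*pi))" by (rule ss_dz[OF sf t])
  hence "((\<lambda>y. f (y + 2*pi) t) has_real_derivative pz f (z + 2*pi) t) (at z)"
    using DERIV_shift[of "\<lambda>y. f y t" "pz f (z + 2*pi) t" z "2*pi"] by simp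
  moreover have "(\<lambda>y. f (y + 2*pi) t) = (\<lambda>y. f y t)" using gf t by (auto simp: good_def)
  ultimately have "((\<lambda>y. f y t) has_real_derivative pz f (z + 2*pi) t) (at z)" by simp
  thus ?thesis using ss_dz[OF sf t, of z] DERIV_unique by blast
qed

lemma sd_per:
  assumes gf: "good T f" and gp: "good T \<phi>" and t: "t \<in> tint T"
  shows "sd \<phi> f (z + 2*pi) t = sd \<phi> f z t"
  unfolding sd_def pz_per[OF gf t] using gp t by (simp add: good_def)

lemma grad_bound:
  assumes T0: "0 < T" and gp: "good T \<phi>" and gf: "good T f" and gg: "good T g" and gh: "good T h"
    and ef: "evo T \<phi> f g h"
    and ephi: "\<forall>z. \<forall>t\<in>tint T. ((\<lambda>s. \<phi> z s) has_real_derivative \<phi> z t *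
        (sd \<phi> (sd \<phi> f) z t / f z t + sd \<phi> (sd \<phi> g) z t / g z t + sd \<phi> (sd \<phi> h) z t / h z t)) (at t within tint T)"
    and K: "0 < K"
    and RC: "\<forall>z. \<forall>t\<in>tint T. \<forall>S p q. K \<le> S \<longrightarrow> 0 < S*(p^2/(g z t)^2 + q^2/(h z t)^2) +
        2*(G1f (f z t) (g z t) (h z t)*S + G2f (f z t) (g z t) (h z t)*p + G3f (f z t) (g z t) (h z t)*q)"
  shows "\<forall>z. \<forall>t\<in>tint T. \<bar>sd \<phi> f z t\<bar> \<le> max K (SUP z\<in>{0..2*pi}. \<bar>sd \<phi> f z 0\<bar>)"
proof -
  have sf: "smooth_strip T f" and sp: "smooth_strip T \<phi>"
    using gf gp by (auto simp: good_def)
  have t00: "(0::real) \<in> tint T" by (rule tint_0[OF T0])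
  define M0 where "M0 = (SUP z\<in>{0..2*pi}. \<bar>sd \<phi> f z 0\<bar>)"
  define C where "C = max K M0"
  have cu: "continuous_on (UNIV \<times> tint T) (\<lambda>(z,t). sd \<phi> f z t)"
    using cont_sd[OF sf gp] by (simp add: case_prod_unfold)
  have bdd: "bdd_above ((\<lambda>z. \<bar>sd \<phi> f z 0\<bar>) ` {0..2*pi})"
  proof -
    have "continuous_on {0..2*pi} (\<lambda>z. sd \<phi> f z 0)"
    proof -
      have "continuous_on {0..2*pi} ((\<lambda>p. sd \<phi> f (fst p) (snd p)) \<circ> (\<lambda>z. (z, 0::real)))"
        by (rule continuous_on_compose) (auto intro!: continuous_intros continuous_on_subset[OF cont_sd[OF sf gp]] simp: t00)
      thus ?thesis by (simp add: o_def)
    qed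
    hence "continuous_on {0..2*pi} (\<lambda>z. \<bar>sd \<phi> f z 0\<bar>)" by (intro continuous_intros)
    hence "compact ((\<lambda>z. \<bar>sd \<phi> f z 0\<bar>) ` {0..2*pi})" by (intro compact_continuous_image) auto
    thus ?thesis by (intro bounded_imp_bdd_above compact_imp_bounded)
  qed
  have init: "\<And>z. \<bar>sd \<phi> f z 0\<bar> \<le> C"
  proof -
    fix z
    obtain y where y: "y \<in> {0..2*pi}" "sd \<phi> f y 0 = sd \<phi> f z 0"
      using per_red[of "\<lambda>z. sd \<phi> f z 0" z] sd_per[OF gf gp t00] by auto
    have "\<bar>sd \<phi> f y 0\<bar> \<le> M0" unfolding M0_def by (rule cSUP_upper[OF y(1) bdd])
    thus "\<bar>sd \<phi> f z 0\<bar> \<le> C" using y unfolding C_def by simp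
  qed
  have CK: "K \<le> C" unfolding C_def by simp
  have per: "\<And>w. \<forall>z. \<forall>t\<in>tint T. w + sd \<phi> f (z + 2*pi) t = w + sd \<phi> f z t"
    using sd_per[OF gf gp] by simp
  have pos: "\<And>z t. t \<in> tint T \<Longrightarrow> 0 < \<phi> z t" using gp by (simp add: good_def)
  have critfacts: "\<And>z0 t0 Sg. t0 \<in> tint T \<Longrightarrow> 0 < t0 \<Longrightarrow>
      (\<forall>y. Sg * sd \<phi> f z0 t0 \<le> Sg * sd \<phi> f y t0) \<Longrightarrow> Sg = 1 \<or> Sg = -1 \<Longrightarrow>
      pz (pz f) z0 t0 * \<phi> z0 t0 - pz f z0 t0 * pz \<phi> z0 t0 = 0 \<and>
      0 \<le> Sg * (pz (pz (pz f)) z0 t0 * \<phi> z0 t0 - pz f z0 t0 * pz (pz \<phi>) z0 t0)"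
  proof -
    fix z0 t0 Sg assume t0: "t0 \<in> tint T" "0 < t0" and mn: "\<forall>y. Sg * sd \<phi> f z0 t0 \<le> Sg * sd \<phi> f y t0"
      and Sg: "Sg = 1 \<or> Sg = -1"
    have p0: "\<forall>y. \<phi> y t0 \<noteq> 0" using pos[OF t0(1)] by (metis less_irrefl)
    note P = pos[OF t0(1), of z0]
    have d1: "\<And>y. ((\<lambda>y. Sg * sd \<phi> f y t0) has_real_derivative
        (\<lambda>y. Sg * ((pz (pz f) y t0 * \<phi> y t0 - pz f y t0 * pz \<phi> y t0) / (\<phi> y t0)^2)) y) (at y)"
      by (rule DERIV_cmult, rule sd_der[OF sf sp t0(1)]) (use p0 in auto)
    have d2: "((\<lambda>y. Sg * ((pz (pz f) y t0 * \<phi> y t0 - pz f y t0 * pz \<phi> y t0) / (\<phi> y t0)^2)) has_real_derivative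
       Sg * ((pz (pz (pz f)) z0 t0 * \<phi> z0 t0 + pz (pz f) z0 t0 * pz \<phi> z0 t0 - pz (pz f) z0 t0 * pz \<phi> z0 t0
          - pz f z0 t0 * pz (pz \<phi>) z0 t0) / (\<phi> z0 t0)^2
          - 2 * pz \<phi> z0 t0 * (pz (pz f) z0 t0 * \<phi> z0 t0 - pz f z0 t0 * pz \<phi> z0 t0) / (\<phi> z0 t0)^3)) (at z0)"
      by (rule DERIV_cmult, rule der_q2[OF ss_dz[OF ss_pz[OF ss_pz[OF sf]] t0(1)] ss_dz[OF sp t0(1)]
          ss_dz[OF ss_pz[OF sf] t0(1)] ss_dz[OF ss_pz[OF sp] t0(1)]]) (use p0 in auto)
    note cm = crit_min[OF mn d1 d2]
    show "pz (pz f) z0 t0 * \<phi> z0 t0 - pz f z0 t0 * pz \<phi> z0 t0 = 0 \<and>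
      0 \<le> Sg * (pz (pz (pz f)) z0 t0 * \<phi> z0 t0 - pz f z0 t0 * pz (pz \<phi>) z0 t0)"
    proof
      have "Sg \<noteq> 0" using Sg by auto
      thus c: "pz (pz f) z0 t0 * \<phi> z0 t0 - pz f z0 t0 * pz \<phi> z0 t0 = 0" using cm P by simp
      have "0 \<le> Sg * ((pz (pz (pz f)) z0 t0 * \<phi> z0 t0 - pz f z0 t0 * pz (pz \<phi>) z0 t0) / (\<phi> z0 t0)^2)"
        using cm c by simp
      thus "0 \<le> Sg * (pz (pz (pz f)) z0 t0 * \<phi> z0 t0 - pz f z0 t0 * pz (pz \<phi>) z0 t0)"
        using P by (simp add: zero_le_mult_iff zero_le_divide_iff)
    qed
  qed
  have key: "\<forall>z. \<forall>t\<in>tint T. 0 \<le> C + Sg * sd \<phi> f z t" if Sg: "Sg = 1 \<or> Sg = -1" for Sg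
  proof (rule minp[OF T0, where \<kappa>="\<lambda>z t. 0"])
    show "continuous_on (UNIV \<times> tint T) (\<lambda>(z, t). C + Sg * sd \<phi> f z t)"
      unfolding case_prod_unfold by (intro continuous_intros cont_sd[OF sf gp])
    show "continuous_on (UNIV \<times> tint T) (\<lambda>(z, t). 0::real)" by (simp add: case_prod_unfold)
    show "\<forall>z. \<forall>t\<in>tint T. C + Sg * sd \<phi> f (z + 2 * pi) t = C + Sg * sd \<phi> f z t"
      using sd_per[OF gf gp] by simp
    show "\<forall>z. 0 \<le> C + Sg * sd \<phi> f z 0"
    proof
      fix z show "0 \<le> C + Sg * sd \<phi> f z 0" using init[of z] Sg by (auto simp: abs_le_iff)
    qed
    show "\<forall>z t. t \<in> tint T \<longrightarrow> 0 < t \<longrightarrow> (\<forall>y. C + Sg * sd \<phi> f z t \<le> C + Sg * sd \<phi> f y t) \<longrightarrow>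
        C + Sg * sd \<phi> f z t < 0 \<longrightarrow>
        (\<exists>D. ((\<lambda>s. C + Sg * sd \<phi> f z s) has_real_derivative D) (at t) \<and> 0 * (C + Sg * sd \<phi> f z t) < D)"
    proof (intro allI impI)
      fix z0 t0 assume t0: "t0 \<in> tint T" "0 < t0"
        and mn: "\<forall>y. C + Sg * sd \<phi> f z0 t0 \<le> C + Sg * sd \<phi> f y t0" and neg: "C + Sg * sd \<phi> f z0 t0 < 0"
      have mn': "\<forall>y. Sg * sd \<phi> f z0 t0 \<le> Sg * sd \<phi> f y t0" using mn by simp
      note cf = critfacts[OF t0 mn' Sg]
      note dU = dtu_formula[OF gp gf gg gh ef ephi t0 conjunct1[OF cf]]
      define S where "S = sd \<phi> f z0 t0"
      define SY where "SY = sd \<phi> g z0 t0"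
      define SZ where "SZ = sd \<phi> h z0 t0"
      define Q where "Q = pz (pz (pz f)) z0 t0 * \<phi> z0 t0 - pz f z0 t0 * pz (pz \<phi>) z0 t0"
      define R where "R = S * (SY^2/(g z0 t0)^2 + SZ^2/(h z0 t0)^2) + 2*(G1f (f z0 t0) (g z0 t0) (h z0 t0) * S
          + G2f (f z0 t0) (g z0 t0) (h z0 t0) * SY + G3f (f z0 t0) (g z0 t0) (h z0 t0) * SZ)"
      have dU': "((\<lambda>s. sd \<phi> f z0 s) has_real_derivative Q/(\<phi> z0 t0)^4 - R) (at t0)"
        using dU unfolding Q_def R_def S_def SY_def SZ_def by (simp add: algebra_simps)
      have dW: "((\<lambda>s. C + Sg * sd \<phi> f z0 s) has_real_derivative Sg * (Q/(\<phi> z0 t0)^4 - R)) (at t0)"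
        by (auto intro!: derivative_eq_intros dU')
      have SgQ: "0 \<le> Sg * Q" using cf unfolding Q_def by simp
      have SK: "K \<le> - Sg * S" using neg CK Sg unfolding S_def by auto
      have RCi: "0 < (- Sg * S)*((- Sg * SY)^2/(g z0 t0)^2 + (- Sg * SZ)^2/(h z0 t0)^2) +
        2*(G1f (f z0 t0) (g z0 t0) (h z0 t0)*(- Sg * S) + G2f (f z0 t0) (g z0 t0) (h z0 t0)*(- Sg * SY)
          + G3f (f z0 t0) (g z0 t0) (h z0 t0)*(- Sg * SZ))"
        by (rule RC[rule_format, OF t0(1) SK])
      have sq: "Sg^2 = 1" using Sg by auto
      have "(- Sg * S)*((- Sg * SY)^2/(g z0 t0)^2 + (- Sg * SZ)^2/(h z0 t0)^2) +
        2*(G1f (f z0 t0) (g z0 t0) (h z0 t0)*(- Sg * S) + G2f (f z0 t0) (g z0 t0) (h z0 t0)*(- Sg * SY)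
          + G3f (f z0 t0) (g z0 t0) (h z0 t0)*(- Sg * SZ)) = - Sg * R"
      proof -
        have e1: "(- Sg * SY)^2 = SY^2" using sq by (simp add: power_mult_distrib)
        have e2: "(- Sg * SZ)^2 = SZ^2" using sq by (simp add: power_mult_distrib)
        show ?thesis unfolding e1 e2 R_def by (simp add: algebra_simps)
      qed
      hence SR: "0 < - Sg * R" using RCi by simp
      have "0 \<le> Sg * Q / (\<phi> z0 t0)^4" using SgQ by simp
      hence "0 < Sg * (Q/(\<phi> z0 t0)^4 - R)" using SR by (simp add: algebra_simps)
      thus "\<exists>D. ((\<lambda>s. C + Sg * sd \<phi> f z0 s) has_real_derivative D) (at t0) \<and> 0 * (C + Sg * sd \<phi> f z0 t0) < D"
        using dW by auto
    qed
  qed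
  show ?thesis
  proof (intro allI ballI)
    fix z t assume t: "t \<in> tint T"
    have "0 \<le> C + 1 * sd \<phi> f z t" "0 \<le> C + (-1) * sd \<phi> f z t" using key[of 1] key[of "-1"] t by auto
    thus "\<bar>sd \<phi> f z t\<bar> \<le> max K (SUP z\<in>{0..2*pi}. \<bar>sd \<phi> f z 0\<bar>)"
      unfolding C_def[symmetric] M0_def[symmetric] by (simp add: abs_le_iff)
  qed
qed

lemma Gf_sym: "Gf x y z = Gf x z y"
  unfolding Gf_def by (simp add: power2_commute mult_ac)

lemma evo_swap: "evo T \<phi> f g h \<Longrightarrow> evo T \<phi> f h g"
  unfolding evo_def by (simp add: Gf_sym add.commute)

lemma lam_ok: "10 \<le> 280 * sqrt 3 / (9::real)" "10 \<le> 4 * sqrt 57 / (3::real)" "10 \<le> 10 * sqrt 93 / (9::real)"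
proof -
  have "1 \<le> sqrt (3::real)" by simp
  hence "9 \<le> 28 * sqrt (3::real)" by linarith
  thus "10 \<le> 280 * sqrt 3 / (9::real)" by simp
  have "15/2 \<le> sqrt (57::real)" by (rule real_le_rsqrt) (simp add: power2_eq_square)
  thus "10 \<le> 4 * sqrt 57 / (3::real)" by simp
  have "9 \<le> sqrt (93::real)" by (rule real_le_rsqrt) (simp add: power2_eq_square)
  thus "10 \<le> 10 * sqrt 93 / (9::real)" by simp
qed

theorem lemma4p7:
  fixes \<phi> a b c :: "real \<Rightarrow> real \<Rightarrow> real" and T :: ereal and lam :: real
  assumes "rf_maximal T \<phi> a b c"
    and "1 < lam" and "lam < 2"
    and "\<forall>z. a z 0 \<le> b z 0 \<and> b z 0 \<le> c z 0 \<and> c z 0 \<le> lam * a z 0"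
  shows "\<exists>C1 C2 C3. C1 > 0 \<and> C2 > 0 \<and> C3 > 0 \<and>
    (\<forall>z. \<forall>t\<in>tint T. \<bar>sd \<phi> a z t\<bar> \<le> C1 \<and> \<bar>sd \<phi> b z t\<bar> \<le> C2 \<and> \<bar>sd \<phi> c z t\<bar> \<le> C3) \<and>
    C1 \<le> max (280 * sqrt 3 / 9) (SUP z\<in>{0..2*pi}. \<bar>sd \<phi> a z 0\<bar>) \<and>
    C2 \<le> max (4 * sqrt 57 / 3) (SUP z\<in>{0..2*pi}. \<bar>sd \<phi> b z 0\<bar>) \<and>
    C3 \<le> max (10 * sqrt 93 / 9) (SUP z\<in>{0..2*pi}. \<bar>sd \<phi> c z 0\<bar>)"
proof -
  have rf: "rf_solution T \<phi> a b c" using assms(1) by (simp add: rf_maximal_def)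
  have T0: "0 < T" using rf by (simp add: rf_solution_def)
  have gd: "good T \<phi>" "good T a" "good T b" "good T c" using rf by (auto simp: rf_solution_def good_def)
  note eqs = rf[unfolded rf_solution_def, THEN conjunct2, THEN conjunct2]
  have ea: "evo T \<phi> a b c"
    unfolding evo_def Gf_def using eqs by simp
  have eb: "evo T \<phi> b a c"
    unfolding evo_def Gf_def using eqs by (simp add: mult_ac)
  have ec: "evo T \<phi> c a b"
    unfolding evo_def Gf_def using eqs by (simp add: mult_ac)
  have ephi_a: "\<forall>z. \<forall>t\<in>tint T. ((\<lambda>s. \<phi> z s) has_real_derivative \<phi> z t *
        (sd \<phi> (sd \<phi> a) z t / a z t + sd \<phi> (sd \<phi> b) z t / b z t + sd \<phi> (sd \<phi> c) z t / c z t)) (at t within tint T)"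
    using eqs by simp
  have ephi_b: "\<forall>z. \<forall>t\<in>tint T. ((\<lambda>s. \<phi> z s) has_real_derivative \<phi> z t *
        (sd \<phi> (sd \<phi> b) z t / b z t + sd \<phi> (sd \<phi> a) z t / a z t + sd \<phi> (sd \<phi> c) z t / c z t)) (at t within tint T)"
    using eqs by (simp add: add_ac)
  have ephi_c: "\<forall>z. \<forall>t\<in>tint T. ((\<lambda>s. \<phi> z s) has_real_derivative \<phi> z t *
        (sd \<phi> (sd \<phi> c) z t / c z t + sd \<phi> (sd \<phi> a) z t / a z t + sd \<phi> (sd \<phi> b) z t / b z t)) (at t within tint T)"
    using eqs by (simp add: add_ac)
  have ab: "\<forall>z. \<forall>t\<in>tint T. a z t \<le> b z t"
    by (rule pair_pres[OF T0 gd(1) gd(2) gd(3) gd(4) ea eb]) (use assms(4) in auto)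
  have bc: "\<forall>z. \<forall>t\<in>tint T. b z t \<le> c z t"
    by (rule pair_pres[OF T0 gd(1) gd(3) gd(4) gd(2) evo_swap[OF eb] evo_swap[OF ec]]) (use assms(4) in auto)
  have cl: "\<forall>z. \<forall>t\<in>tint T. c z t \<le> lam * a z t"
    by (rule lam_pres[OF T0 gd ea ec _ assms(2)]) (use ab bc assms(4) in auto)
  have pos: "\<And>z t. t \<in> tint T \<Longrightarrow> 0 < a z t" using gd(2) by (simp add: good_def)
  have c2: "\<And>z t. t \<in> tint T \<Longrightarrow> c z t \<le> 2 * a z t"
  proof -
    fix z t assume t: "t \<in> tint T"
    have "lam * a z t \<le> 2 * a z t" using assms(3) pos[OF t, of z] by simp
    moreover have "c z t \<le> lam * a z t" using cl t by blast
    ultimately show "c z t \<le> 2 * a z t" by linarith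
  qed
  have RCa: "\<forall>z. \<forall>t\<in>tint T. \<forall>S p q. 10 \<le> S \<longrightarrow> 0 < S*(p^2/(b z t)^2 + q^2/(c z t)^2) +
        2*(G1f (a z t) (b z t) (c z t)*S + G2f (a z t) (b z t) (c z t)*p + G3f (a z t) (b z t) (c z t)*q)"
  proof (intro allI ballI impI)
    fix z t S p q assume t: "t \<in> tint T" and S: "(10::real) \<le> S"
    have "0 < a z t" "a z t \<le> b z t" "b z t \<le> c z t" "c z t \<le> 2 * a z t"
      using pos[OF t] ab bc c2[OF t] t by auto
    thus "0 < S*(p^2/(b z t)^2 + q^2/(c z t)^2) +
        2*(G1f (a z t) (b z t) (c z t)*S + G2f (a z t) (b z t) (c z t)*p + G3f (a z t) (b z t) (c z t)*q)"
      using S by (intro react caseA) auto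
  qed
  have RCb: "\<forall>z. \<forall>t\<in>tint T. \<forall>S p q. 10 \<le> S \<longrightarrow> 0 < S*(p^2/(a z t)^2 + q^2/(c z t)^2) +
        2*(G1f (b z t) (a z t) (c z t)*S + G2f (b z t) (a z t) (c z t)*p + G3f (b z t) (a z t) (c z t)*q)"
  proof (intro allI ballI impI)
    fix z t S p q assume t: "t \<in> tint T" and S: "(10::real) \<le> S"
    have "0 < a z t" "a z t \<le> b z t" "b z t \<le> c z t" "c z t \<le> 2 * a z t"
      using pos[OF t] ab bc c2[OF t] t by auto
    thus "0 < S*(p^2/(a z t)^2 + q^2/(c z t)^2) +
        2*(G1f (b z t) (a z t) (c z t)*S + G2f (b z t) (a z t) (c z t)*p + G3f (b z t) (a z t) (c z t)*q)"
      using S by (intro react caseB) auto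
  qed
  have RCc: "\<forall>z. \<forall>t\<in>tint T. \<forall>S p q. 10 \<le> S \<longrightarrow> 0 < S*(p^2/(a z t)^2 + q^2/(b z t)^2) +
        2*(G1f (c z t) (a z t) (b z t)*S + G2f (c z t) (a z t) (b z t)*p + G3f (c z t) (a z t) (b z t)*q)"
  proof (intro allI ballI impI)
    fix z t S p q assume t: "t \<in> tint T" and S: "(10::real) \<le> S"
    have "0 < a z t" "a z t \<le> b z t" "b z t \<le> c z t" "c z t \<le> 2 * a z t"
      using pos[OF t] ab bc c2[OF t] t by auto
    thus "0 < S*(p^2/(a z t)^2 + q^2/(b z t)^2) +
        2*(G1f (c z t) (a z t) (b z t)*S + G2f (c z t) (a z t) (b z t)*p + G3f (c z t) (a z t) (b z t)*q)"
      using S by (intro react caseC) auto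
  qed
  have Ba: "\<forall>z. \<forall>t\<in>tint T. \<bar>sd \<phi> a z t\<bar> \<le> max 10 (SUP z\<in>{0..2*pi}. \<bar>sd \<phi> a z 0\<bar>)"
    by (rule grad_bound[OF T0 gd(1) gd(2) gd(3) gd(4) ea ephi_a _ RCa]) simp
  have Bb: "\<forall>z. \<forall>t\<in>tint T. \<bar>sd \<phi> b z t\<bar> \<le> max 10 (SUP z\<in>{0..2*pi}. \<bar>sd \<phi> b z 0\<bar>)"
    by (rule grad_bound[OF T0 gd(1) gd(3) gd(2) gd(4) eb ephi_b _ RCb]) simp
  have Bc: "\<forall>z. \<forall>t\<in>tint T. \<bar>sd \<phi> c z t\<bar> \<le> max 10 (SUP z\<in>{0..2*pi}. \<bar>sd \<phi> c z 0\<bar>)"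
    by (rule grad_bound[OF T0 gd(1) gd(4) gd(2) gd(3) ec ephi_c _ RCc]) simp
  show ?thesis
    apply (rule exI[of _ "max 10 (SUP z\<in>{0..2*pi}. \<bar>sd \<phi> a z 0\<bar>)"])
    apply (rule exI[of _ "max 10 (SUP z\<in>{0..2*pi}. \<bar>sd \<phi> b z 0\<bar>)"])
    apply (rule exI[of _ "max 10 (SUP z\<in>{0..2*pi}. \<bar>sd \<phi> c z 0\<bar>)"])
    using Ba Bb Bc lam_ok by (auto simp: max_def)
qed


end
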